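(* Let $G$ be a finite group, $\xi$ a linear character of $G$, and $\varepsilon$ either the trivial or the sign character of $S_2$. Let $SG_2=G\wr S_2$ and $HG_1=\{(g,g;\sigma)\mid g\in G,\sigma\in S_2\}\subset SG_2$, and let $\xi\otimes\varepsilon$ be the linear character $(g,g;\sigma)\mapsto\xi(g)\varepsilon(\sigma)$ of $HG_1$. Then $(\xi\otimes\varepsilon)\uparrow_{HG_1}^{SG_2}$ is multiplicity-free, i.e. $(SG_2,HG_1,\xi\otimes\varepsilon)$ is a Gelfand triple.
   Context: $G\wr S_2=\{(g_1,g_2;\sigma)\mid g_i\in G,\sigma\in S_2\}$ with multiplication $(g_1,g_2;\sigma)(h_1,h_2;\tau)=(g_1h_{\sigma^{-1}(1)},g_2h_{\sigma^{-1}(2)};\sigma\tau)$. A Gelfand triple $(G,H,\phi)$ means the induced representation $\phi\uparrow_H^G$ is multiplicity-free. *)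

theory Defs
  imports "HOL-Algebra.Sym_Groups" "Jordan_Normal_Form.Matrix"
begin

text \<open>Wreath product G wr S_2, with S_2 = sym_group 2 (permutations of {1,2}).
  Elements (g1, g2, sigma); h_i is selected by the index i in {1,2}.\<close>

definition coord2 :: "'a \<times> 'a \<Rightarrow> nat \<Rightarrow> 'a" where
  "coord2 p i = (if i = 1 then fst p else snd p)"

definition wreath2 :: "('a, 'b) monoid_scheme \<Rightarrow> ('a \<times> 'a \<times> (nat \<Rightarrow> nat)) monoid" where
  "wreath2 G = \<lparr> carrier = {(g1, g2, s). g1 \<in> carrier G \<and> g2 \<in> carrier G \<and> s \<in> carrier (sym_group 2)},
     mult = (\<lambda>(g1, g2, s) (h1, h2, t).
        (g1 \<otimes>\<^bsub>G\<^esub> coord2 (h1, h2) (Hilbert_Choice.inv s 1), g2 \<otimes>\<^bsub>G\<^esub> coord2 (h1, h2) (Hilbert_Choice.inv s 2), s \<circ> t)),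
     one = (\<one>\<^bsub>G\<^esub>, \<one>\<^bsub>G\<^esub>, id) \<rparr>"

definition diag_wreath2 :: "('a, 'b) monoid_scheme \<Rightarrow> ('a \<times> 'a \<times> (nat \<Rightarrow> nat)) set" where
  "diag_wreath2 G = {(g, g, s) | g s. g \<in> carrier G \<and> s \<in> carrier (sym_group 2)}"

definition linear_char :: "('a, 'b) monoid_scheme \<Rightarrow> ('a \<Rightarrow> complex) \<Rightarrow> bool" where
  "linear_char G \<xi> \<longleftrightarrow> (\<forall>x\<in>carrier G. \<xi> x \<noteq> 0) \<and>
     (\<forall>x\<in>carrier G. \<forall>y\<in>carrier G. \<xi> (x \<otimes>\<^bsub>G\<^esub> y) = \<xi> x * \<xi> y)"

definition tensor_char :: "('a \<Rightarrow> complex) \<Rightarrow> ((nat \<Rightarrow> nat) \<Rightarrow> complex) \<Rightarrow> ('a \<times> 'a \<times> (nat \<Rightarrow> nat)) \<Rightarrow> complex" where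
  "tensor_char \<xi> \<epsilon> x = (case x of (g, _, s) \<Rightarrow> \<xi> g * \<epsilon> s)"

definition mat_rep :: "('g, 'b) monoid_scheme \<Rightarrow> nat \<Rightarrow> ('g \<Rightarrow> complex mat) \<Rightarrow> bool" where
  "mat_rep G n \<rho> \<longleftrightarrow> (\<forall>g\<in>carrier G. \<rho> g \<in> carrier_mat n n) \<and> \<rho> \<one>\<^bsub>G\<^esub> = 1\<^sub>m n \<and>
     (\<forall>g\<in>carrier G. \<forall>h\<in>carrier G. \<rho> (g \<otimes>\<^bsub>G\<^esub> h) = \<rho> g * \<rho> h)"

definition subspace_vec :: "nat \<Rightarrow> complex vec set \<Rightarrow> bool" where
  "subspace_vec n U \<longleftrightarrow> U \<subseteq> carrier_vec n \<and> 0\<^sub>v n \<in> U \<and>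
     (\<forall>u\<in>U. \<forall>w\<in>U. u + w \<in> U) \<and> (\<forall>c. \<forall>u\<in>U. c \<cdot>\<^sub>v u \<in> U)"

definition irred_rep :: "('g, 'b) monoid_scheme \<Rightarrow> nat \<Rightarrow> ('g \<Rightarrow> complex mat) \<Rightarrow> bool" where
  "irred_rep G n \<rho> \<longleftrightarrow> mat_rep G n \<rho> \<and> n > 0 \<and>
     (\<forall>U. subspace_vec n U \<and> (\<forall>g\<in>carrier G. \<forall>u\<in>U. \<rho> g *\<^sub>v u \<in> U)
          \<longrightarrow> U = {0\<^sub>v n} \<or> U = carrier_vec n)"

text \<open>Model of the induced representation phi ind_H^G: functions f on G with
  f(h x) = phi(h) f(x) for h in H, zero outside G; G acts by (g.f)(x) = f(x g).\<close>
definition ind_space :: "('g, 'b) monoid_scheme \<Rightarrow> 'g set \<Rightarrow> ('g \<Rightarrow> complex) \<Rightarrow> ('g \<Rightarrow> complex) set" where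
  "ind_space G H \<phi> = {f. (\<forall>h\<in>H. \<forall>x\<in>carrier G. f (h \<otimes>\<^bsub>G\<^esub> x) = \<phi> h * f x) \<and>
                          (\<forall>x. x \<notin> carrier G \<longrightarrow> f x = 0)}"

definition intertwiner :: "('g, 'b) monoid_scheme \<Rightarrow> 'g set \<Rightarrow> ('g \<Rightarrow> complex) \<Rightarrow> nat \<Rightarrow> ('g \<Rightarrow> complex mat)
    \<Rightarrow> (complex vec \<Rightarrow> 'g \<Rightarrow> complex) \<Rightarrow> bool" where
  "intertwiner G H \<phi> n \<rho> T \<longleftrightarrow>
     (\<forall>v\<in>carrier_vec n. T v \<in> ind_space G H \<phi>) \<and>
     (\<forall>v\<in>carrier_vec n. \<forall>w\<in>carrier_vec n. T (v + w) = (\<lambda>x. T v x + T w x)) \<and>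
     (\<forall>c. \<forall>v\<in>carrier_vec n. T (c \<cdot>\<^sub>v v) = (\<lambda>x. c * T v x)) \<and>
     (\<forall>g\<in>carrier G. \<forall>v\<in>carrier_vec n. T (\<rho> g *\<^sub>v v) = (\<lambda>x. T v (x \<otimes>\<^bsub>G\<^esub> g)))"

text \<open>Multiplicity-free: for every irreducible representation W, dim Hom_G(W, Ind) \<le> 1,
  i.e. any two intertwiners are linearly dependent.\<close>
definition gelfand_triple :: "('g, 'b) monoid_scheme \<Rightarrow> 'g set \<Rightarrow> ('g \<Rightarrow> complex) \<Rightarrow> bool" where
  "gelfand_triple G H \<phi> \<longleftrightarrow>
     (\<forall>n \<rho> T1 T2. irred_rep G n \<rho> \<and> intertwiner G H \<phi> n \<rho> T1 \<and> intertwiner G H \<phi> n \<rho> T2 \<longrightarrow>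
        (\<exists>c. \<forall>v\<in>carrier_vec n. T1 v = (\<lambda>x. c * T2 v x)) \<or>
        (\<exists>c. \<forall>v\<in>carrier_vec n. T2 v = (\<lambda>x. c * T1 v x)))"

end

theory Submission
  imports Defs "Jordan_Normal_Form.Schur_Decomposition"
begin

definition sw :: "nat \<Rightarrow> nat" where "sw = Transposition.transpose (1::nat) 2"

lemma S2_carrier: "carrier (sym_group 2) = {id, sw}"
proof
  show "{id, sw} \<subseteq> carrier (sym_group 2)"
    by (auto simp: sym_group_def permutes_id permutes_swap_id sw_def)
  show "carrier (sym_group 2) \<subseteq> {id, sw}"
  proof
    fix p assume "p \<in> carrier (sym_group 2)"
    hence p: "p permutes {1..2}" by (simp add: sym_group_def)
    have out: "\<And>x. x \<noteq> 1 \<Longrightarrow> x \<noteq> 2 \<Longrightarrow> p x = x" using permutes_not_in[OF p] by auto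
    have p1: "p 1 \<in> {1,2}" using permutes_in_image[OF p, of 1] by auto
    have p2: "p 2 \<in> {1,2}" using permutes_in_image[OF p, of 2] by auto
    have inj: "inj p" using p permutes_inj by blast
    show "p \<in> {id, sw}"
    proof (cases "p 1 = 1")
      case True
      hence "p 2 = 2" using p2 inj by (metis insertE injD numeral_eq_one_iff semiring_norm(85) singletonD)
      hence "p = id" using True out by (intro ext) (metis id_apply)
      thus ?thesis by simp
    next
      case False
      hence a: "p 1 = 2" using p1 by auto
      hence "p 2 = 1" using p2 inj by (metis insertE injD one_neq_zero numeral_eq_one_iff singletonD)
      hence "p = sw" using a out by (intro ext) (auto simp: transpose_def sw_def)
      thus ?thesis by simp
    qed
  qed
qed

lemma inv_sw: "Hilbert_Choice.inv sw = sw"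
  by (simp add: inv_swap_id sw_def)

lemma sw_sw[simp]: "sw \<circ> sw = id" by (simp add: sw_def)

lemma sign_sw: "sign sw = -1" by (simp add: sign_swap_id sw_def)

lemma wmult_id: "(g1, g2, id) \<otimes>\<^bsub>wreath2 G\<^esub> (h1, h2, t) = (g1 \<otimes>\<^bsub>G\<^esub> h1, g2 \<otimes>\<^bsub>G\<^esub> h2, t)"
  by (simp add: wreath2_def coord2_def)

lemma wmult_sw: "(g1, g2, sw) \<otimes>\<^bsub>wreath2 G\<^esub> (h1, h2, t) = (g1 \<otimes>\<^bsub>G\<^esub> h2, g2 \<otimes>\<^bsub>G\<^esub> h1, sw \<circ> t)"
  by (simp add: wreath2_def coord2_def inv_sw transpose_def sw_def)

lemma wone: "\<one>\<^bsub>wreath2 G\<^esub> = (\<one>\<^bsub>G\<^esub>, \<one>\<^bsub>G\<^esub>, id)" by (simp add: wreath2_def)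

lemma wcarrier: "x \<in> carrier (wreath2 G) \<longleftrightarrow> fst x \<in> carrier G \<and> fst (snd x) \<in> carrier G \<and> (snd (snd x) = id \<or> snd (snd x) = sw)"
  by (cases x) (auto simp: wreath2_def S2_carrier)

lemma wreath2_group: assumes "group G" shows "group (wreath2 G)"
proof -
  interpret G: group G by fact
  have cl: "x \<otimes>\<^bsub>wreath2 G\<^esub> y \<in> carrier (wreath2 G)" if "x \<in> carrier (wreath2 G)" "y \<in> carrier (wreath2 G)" for x y
    using that by (cases x; cases y) (auto simp: wcarrier wmult_id wmult_sw)
  show ?thesis
  proof (rule groupI)
    show "\<one>\<^bsub>wreath2 G\<^esub> \<in> carrier (wreath2 G)" by (simp add: wone wcarrier)
  next
    fix x y z assume "x \<in> carrier (wreath2 G)" "y \<in> carrier (wreath2 G)" "z \<in> carrier (wreath2 G)"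
    thus "x \<otimes>\<^bsub>wreath2 G\<^esub> y \<otimes>\<^bsub>wreath2 G\<^esub> z = x \<otimes>\<^bsub>wreath2 G\<^esub> (y \<otimes>\<^bsub>wreath2 G\<^esub> z)"
      by (cases x; cases y; cases z) (auto simp: wcarrier wmult_id wmult_sw G.m_assoc)
  next
    fix x assume "x \<in> carrier (wreath2 G)"
    thus "\<one>\<^bsub>wreath2 G\<^esub> \<otimes>\<^bsub>wreath2 G\<^esub> x = x"
      by (cases x) (auto simp: wcarrier wone wmult_id)
  next
    fix x assume x: "x \<in> carrier (wreath2 G)"
    obtain a b s where xe: "x = (a, b, s)" by (cases x)
    show "\<exists>y\<in>carrier (wreath2 G). y \<otimes>\<^bsub>wreath2 G\<^esub> x = \<one>\<^bsub>wreath2 G\<^esub>"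
    proof (cases "s = id")
      case True
      thus ?thesis using x xe
        by (intro bexI[of _ "(inv\<^bsub>G\<^esub> a, inv\<^bsub>G\<^esub> b, id)"]) (auto simp: wcarrier wmult_id wone)
    next
      case False
      hence "s = sw" using x xe by (auto simp: wcarrier)
      thus ?thesis using x xe
        by (intro bexI[of _ "(inv\<^bsub>G\<^esub> b, inv\<^bsub>G\<^esub> a, sw)"]) (auto simp: wcarrier wmult_sw wone)
    qed
  qed (use cl in auto)
qed

lemma (in group) bij_lmult_sub: assumes "subgroup H G" "a \<in> H"
  shows "bij_betw (\<lambda>x. a \<otimes> x) H H"
proof -
  interpret H: subgroup H G by fact
  show ?thesis
    by (rule bij_betwI[where g="\<lambda>x. inv a \<otimes> x"])
       (use assms(2) in \<open>auto simp: m_assoc[symmetric]\<close>)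
qed

lemma (in group) bij_rmult_sub: assumes "subgroup H G" "a \<in> H"
  shows "bij_betw (\<lambda>x. x \<otimes> a) H H"
proof -
  interpret H: subgroup H G by fact
  show ?thesis
    by (rule bij_betwI[where g="\<lambda>x. x \<otimes> inv a"])
       (use assms(2) in \<open>auto simp: m_assoc\<close>)
qed

lemma (in group) bij_lmult_car: assumes "a \<in> carrier G"
  shows "bij_betw (\<lambda>x. a \<otimes> x) (carrier G) (carrier G)"
  using bij_lmult_sub[OF subgroup_self assms] .

lemma (in group) linv_assoc: "a \<in> carrier G \<Longrightarrow> z \<in> carrier G \<Longrightarrow> inv a \<otimes> (a \<otimes> z) = z"
  by (simp add: m_assoc[symmetric])

lemma (in group) rinv_assoc: "a \<in> carrier G \<Longrightarrow> z \<in> carrier G \<Longrightarrow> a \<otimes> (inv a \<otimes> z) = z"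
  by (simp add: m_assoc[symmetric])

locale hk = group W for W (structure) +
  fixes H :: "'a set" and \<phi> :: "'a \<Rightarrow> complex" and \<psi> :: "'a \<Rightarrow> complex" and s :: 'a
  assumes finW: "finite (carrier W)"
    and sub: "subgroup H W"
    and \<phi>mul: "\<And>a b. a \<in> H \<Longrightarrow> b \<in> H \<Longrightarrow> \<phi> (a \<otimes> b) = \<phi> a * \<phi> b"
    and \<phi>inv: "\<And>h. h \<in> H \<Longrightarrow> \<phi> (inv h) * \<phi> h = 1"
    and \<psi>mul: "\<And>a b. a \<in> carrier W \<Longrightarrow> b \<in> carrier W \<Longrightarrow> \<psi> (a \<otimes> b) = \<psi> a * \<psi> b"
    and \<psi>nz: "\<And>a. a \<in> carrier W \<Longrightarrow> \<psi> a \<noteq> 0"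
    and s: "s \<in> carrier W" "s \<otimes> s = \<one>"
    and dec: "\<And>w. w \<in> carrier W \<Longrightarrow> \<exists>h1\<in>H. \<exists>h2\<in>H. s \<otimes> inv w \<otimes> s = h1 \<otimes> w \<otimes> h2 \<and> \<phi> (inv h1) * \<phi> (inv h2) = \<psi> w"
begin

lemma Hsub: "H \<subseteq> carrier W" by (rule subgroup.subset[OF sub])
lemma Hfin: "finite H" by (rule finite_subset[OF Hsub finW])
lemma Hmem: "h \<in> H \<Longrightarrow> h \<in> carrier W" using Hsub by auto
lemma Hmult: "a \<in> H \<Longrightarrow> b \<in> H \<Longrightarrow> a \<otimes> b \<in> H" by (rule subgroup.m_closed[OF sub])
lemma Hinv: "a \<in> H \<Longrightarrow> inv a \<in> H" by (rule subgroup.m_inv_closed[OF sub])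
lemma Hone: "\<one> \<in> H" by (rule subgroup.one_closed[OF sub])
lemma Hne: "card H > 0" using Hfin Hone by (auto simp: card_gt_0_iff)

lemma \<phi>one: "\<phi> \<one> = 1"
proof -
  have "\<phi> \<one> = \<phi> \<one> * \<phi> \<one>" using \<phi>mul[OF Hone Hone] by (simp only: l_one one_closed)
  moreover have "\<phi> \<one> * \<phi> \<one> = 1" using \<phi>inv[OF Hone] by simp
  ultimately show ?thesis by (rule trans)
qed

lemma \<phi>inv_mult: "a \<in> H \<Longrightarrow> b \<in> H \<Longrightarrow> \<phi> (inv (a \<otimes> b)) = \<phi> (inv a) * \<phi> (inv b)"
  using \<phi>mul[OF Hinv Hinv, of b a] by (simp add: inv_mult_group Hmem mult.commute)

lemma \<psi>one: "\<psi> \<one> = 1"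
proof -
  have "\<psi> \<one> = \<psi> \<one> * \<psi> \<one>" using \<psi>mul[of \<one> \<one>] by (simp only: l_one one_closed)
  thus ?thesis using \<psi>nz[of \<one>] by (metis mult_cancel_left1 one_closed)
qed

lemma \<psi>inv: "a \<in> carrier W \<Longrightarrow> \<psi> a * \<psi> (inv a) = 1"
  using \<psi>mul[of a "inv a"] by (simp add: \<psi>one)

definition \<tau> where "\<tau> x = s \<otimes> inv x \<otimes> s"

lemma \<tau>_car: "x \<in> carrier W \<Longrightarrow> \<tau> x \<in> carrier W" using s by (simp add: \<tau>_def)

lemma s_inv: "inv s = s" using s by (simp add: inv_equality)

lemma ss: "y \<in> carrier W \<Longrightarrow> s \<otimes> (s \<otimes> y) = y"
  using s by (simp add: m_assoc[symmetric])

lemma inv\<tau>: "x \<in> carrier W \<Longrightarrow> inv (\<tau> x) = s \<otimes> x \<otimes> s"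
  using s unfolding \<tau>_def by (simp add: inv_mult_group s_inv m_assoc)

lemma ss': "y \<in> carrier W \<Longrightarrow> y \<otimes> s \<otimes> s = y"
  using s by (simp add: m_assoc)

lemma \<tau>\<tau>: "x \<in> carrier W \<Longrightarrow> \<tau> (\<tau> x) = x"
proof -
  assume x: "x \<in> carrier W"
  have "\<tau> (\<tau> x) = s \<otimes> (s \<otimes> x \<otimes> s) \<otimes> s" unfolding \<tau>_def[of "\<tau> x"] inv\<tau>[OF x] ..
  also have "\<dots> = s \<otimes> (s \<otimes> x \<otimes> s \<otimes> s)" using m_assoc[of s "s \<otimes> x \<otimes> s" s] s(1) x by simp
  also have "s \<otimes> x \<otimes> s \<otimes> s = s \<otimes> x" using ss'[of "s \<otimes> x"] s(1) x by simp
  finally show ?thesis using x by (simp add: ss)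
qed

lemma \<tau>_bij: "bij_betw \<tau> (carrier W) (carrier W)"
  by (rule bij_betwI[where g=\<tau>]) (auto simp: \<tau>_car \<tau>\<tau>)

lemma \<tau>_anti: "x \<in> carrier W \<Longrightarrow> z \<in> carrier W \<Longrightarrow> inv (\<tau> z) \<otimes> \<tau> x = \<tau> (x \<otimes> inv z)"
proof -
  assume x: "x \<in> carrier W" and z: "z \<in> carrier W"
  have "inv (\<tau> z) = s \<otimes> z \<otimes> s" using inv\<tau>[OF z] .
  hence "inv (\<tau> z) \<otimes> \<tau> x = s \<otimes> (z \<otimes> inv x) \<otimes> s"
    using s x z by (simp add: \<tau>_def m_assoc ss)
  also have "\<dots> = \<tau> (x \<otimes> inv z)" using x z by (simp add: \<tau>_def inv_mult_group)
  finally show ?thesis .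
qed

definition beq :: "('a \<Rightarrow> complex) \<Rightarrow> bool" where
  "beq f \<longleftrightarrow> (\<forall>a\<in>H. \<forall>b\<in>H. \<forall>w\<in>carrier W. f (a \<otimes> w \<otimes> b) = \<phi> (inv a) * \<phi> (inv b) * f w)"

lemma beq_\<tau>: assumes "beq f" "w \<in> carrier W" shows "f (\<tau> w) = \<psi> w * f w"
proof -
  obtain h1 h2 where h: "h1 \<in> H" "h2 \<in> H" "\<tau> w = h1 \<otimes> w \<otimes> h2" "\<phi> (inv h1) * \<phi> (inv h2) = \<psi> w"
    using dec[OF assms(2)] unfolding \<tau>_def by blast
  have "f (\<tau> w) = f (h1 \<otimes> w \<otimes> h2)" using h(3) by (rule arg_cong)
  also have "\<dots> = \<phi> (inv h1) * \<phi> (inv h2) * f w" using assms h(1,2) unfolding beq_def by blast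
  finally show ?thesis using h(4) by simp
qed

definition conv :: "('a \<Rightarrow> complex) \<Rightarrow> ('a \<Rightarrow> complex) \<Rightarrow> 'a \<Rightarrow> complex" where
  "conv f g x = (\<Sum>y\<in>carrier W. f y * g (inv y \<otimes> x))"

lemma beq_left: assumes "beq f" "a \<in> H" "w \<in> carrier W" shows "f (a \<otimes> w) = \<phi> (inv a) * f w"
proof -
  have "f (a \<otimes> w \<otimes> \<one>) = \<phi> (inv a) * \<phi> (inv \<one>) * f w" using assms Hone unfolding beq_def by blast
  thus ?thesis using assms by (simp add: \<phi>one Hmem)
qed

lemma beq_right: assumes "beq f" "b \<in> H" "w \<in> carrier W" shows "f (w \<otimes> b) = \<phi> (inv b) * f w"
proof -
  have "f (\<one> \<otimes> w \<otimes> b) = \<phi> (inv \<one>) * \<phi> (inv b) * f w" using assms Hone unfolding beq_def by blast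
  thus ?thesis using assms by (simp add: \<phi>one Hmem)
qed

lemma conv_beq: assumes f: "beq f" and g: "beq g" shows "beq (conv f g)"
  unfolding beq_def
proof (intro ballI)
  fix a b w assume a: "a \<in> H" and b: "b \<in> H" and w: "w \<in> carrier W"
  have am: "a \<in> carrier W" "b \<in> carrier W" using a b Hmem by auto
  have "conv f g (a \<otimes> w \<otimes> b) = (\<Sum>y\<in>carrier W. f (a \<otimes> y) * g (inv (a \<otimes> y) \<otimes> (a \<otimes> w \<otimes> b)))"
    unfolding conv_def by (rule sum.reindex_bij_betw[OF bij_lmult_car[OF am(1)], symmetric])
  also have "\<dots> = (\<Sum>y\<in>carrier W. \<phi> (inv a) * \<phi> (inv b) * (f y * g (inv y \<otimes> w)))"
  proof (rule sum.cong[OF refl])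
    fix y assume y: "y \<in> carrier W"
    have "inv (a \<otimes> y) \<otimes> (a \<otimes> w \<otimes> b) = (inv y \<otimes> w) \<otimes> b"
      using am y w by (simp add: inv_mult_group m_assoc linv_assoc)
    thus "f (a \<otimes> y) * g (inv (a \<otimes> y) \<otimes> (a \<otimes> w \<otimes> b)) = \<phi> (inv a) * \<phi> (inv b) * (f y * g (inv y \<otimes> w))"
      using beq_left[OF f a y] beq_right[OF g b] y w by simp
  qed
  also have "\<dots> = \<phi> (inv a) * \<phi> (inv b) * conv f g w" unfolding conv_def by (simp add: sum_distrib_left)
  finally show "conv f g (a \<otimes> w \<otimes> b) = \<phi> (inv a) * \<phi> (inv b) * conv f g w" .
qed

lemma conv_\<tau>: assumes f1: "beq f1" and f2: "beq f2" and x: "x \<in> carrier W"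
  shows "conv f1 f2 (\<tau> x) = \<psi> x * conv f2 f1 x"
proof -
  have "conv f1 f2 (\<tau> x) = (\<Sum>z\<in>carrier W. f1 (\<tau> z) * f2 (inv (\<tau> z) \<otimes> \<tau> x))"
    unfolding conv_def by (rule sum.reindex_bij_betw[OF \<tau>_bij, symmetric])
  also have "\<dots> = (\<Sum>z\<in>carrier W. \<psi> x * (f1 z * f2 (x \<otimes> inv z)))"
  proof (rule sum.cong[OF refl])
    fix z assume z: "z \<in> carrier W"
    have xz: "x \<otimes> inv z \<in> carrier W" using x z by simp
    have "\<psi> z * \<psi> (x \<otimes> inv z) = \<psi> x * (\<psi> z * \<psi> (inv z))"
      using \<psi>mul[OF x, of "inv z"] z by simp
    also have "\<dots> = \<psi> x" using \<psi>inv[OF z] by simp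
    finally have e: "\<psi> z * \<psi> (x \<otimes> inv z) = \<psi> x" .
    show "f1 (\<tau> z) * f2 (inv (\<tau> z) \<otimes> \<tau> x) = \<psi> x * (f1 z * f2 (x \<otimes> inv z))"
    proof -
      have "f1 (\<tau> z) * f2 (inv (\<tau> z) \<otimes> \<tau> x) = (\<psi> z * f1 z) * (\<psi> (x \<otimes> inv z) * f2 (x \<otimes> inv z))"
        using \<tau>_anti[OF x z] beq_\<tau>[OF f1 z] beq_\<tau>[OF f2 xz] by simp
      also have "\<dots> = (\<psi> z * \<psi> (x \<otimes> inv z)) * (f1 z * f2 (x \<otimes> inv z))" by (simp only: ac_simps)
      finally show ?thesis using e by simp
    qed
  qed
  also have "\<dots> = \<psi> x * (\<Sum>z\<in>carrier W. f1 z * f2 (x \<otimes> inv z))" by (simp add: sum_distrib_left)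
  also have "(\<Sum>z\<in>carrier W. f1 z * f2 (x \<otimes> inv z)) = (\<Sum>w\<in>carrier W. f2 w * f1 (inv w \<otimes> x))"
  proof -
    have bij: "bij_betw (\<lambda>w. inv w \<otimes> x) (carrier W) (carrier W)"
    proof (rule bij_betwI[where g="\<lambda>z. x \<otimes> inv z"])
      show "(\<lambda>w. inv w \<otimes> x) \<in> carrier W \<rightarrow> carrier W" using x by auto
      show "(\<lambda>z. x \<otimes> inv z) \<in> carrier W \<rightarrow> carrier W" using x by auto
      fix w assume w: "w \<in> carrier W"
      show "x \<otimes> inv (inv w \<otimes> x) = w" using x w by (simp add: inv_mult_group m_assoc[symmetric])
      show "inv (x \<otimes> inv w) \<otimes> x = w" using x w by (simp add: inv_mult_group m_assoc)
    qed
    have "(\<Sum>z\<in>carrier W. f1 z * f2 (x \<otimes> inv z)) = (\<Sum>w\<in>carrier W. f1 (inv w \<otimes> x) * f2 (x \<otimes> inv (inv w \<otimes> x)))"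
      by (rule sum.reindex_bij_betw[OF bij, symmetric])
    also have "\<dots> = (\<Sum>w\<in>carrier W. f2 w * f1 (inv w \<otimes> x))"
      by (rule sum.cong[OF refl]) (use x in \<open>simp add: inv_mult_group m_assoc[symmetric]\<close>)
    finally show ?thesis .
  qed
  finally show ?thesis unfolding conv_def .
qed

lemma conv_comm: assumes f1: "beq f1" and f2: "beq f2" and x: "x \<in> carrier W"
  shows "conv f1 f2 x = conv f2 f1 x"
proof -
  have "\<psi> x * conv f1 f2 x = conv f1 f2 (\<tau> x)" using beq_\<tau>[OF conv_beq[OF f1 f2] x] by simp
  also have "\<dots> = \<psi> x * conv f2 f1 x" by (rule conv_\<tau>[OF f1 f2 x])
  finally have "\<psi> x * conv f1 f2 x = \<psi> x * conv f2 f1 x" .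
  thus ?thesis by (rule mult_left_cancel[THEN iffD1, OF \<psi>nz[OF x]])
qed

end

context hk begin

definition fy :: "'a \<Rightarrow> 'a \<Rightarrow> complex" where
  "fy y w = (\<Sum>j\<in>H. \<Sum>k\<in>H. if j \<otimes> y \<otimes> k = w then \<phi> (inv j) * \<phi> (inv k) else 0)"

lemma sum_fy: assumes y: "y \<in> carrier W"
  shows "(\<Sum>w\<in>carrier W. fy y w * g w) = (\<Sum>j\<in>H. \<Sum>k\<in>H. \<phi> (inv j) * \<phi> (inv k) * g (j \<otimes> y \<otimes> k))"
proof -
  have "(\<Sum>w\<in>carrier W. fy y w * g w) = (\<Sum>w\<in>carrier W. \<Sum>j\<in>H. \<Sum>k\<in>H. (if j \<otimes> y \<otimes> k = w then \<phi> (inv j) * \<phi> (inv k) * g w else 0))"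
    unfolding fy_def sum_distrib_right by (intro sum.cong refl) simp
  also have "\<dots> = (\<Sum>j\<in>H. \<Sum>k\<in>H. \<Sum>w\<in>carrier W. (if j \<otimes> y \<otimes> k = w then \<phi> (inv j) * \<phi> (inv k) * g w else 0))"
    by (subst sum.swap) (subst sum.swap, rule refl)
  also have "\<dots> = (\<Sum>j\<in>H. \<Sum>k\<in>H. \<phi> (inv j) * \<phi> (inv k) * g (j \<otimes> y \<otimes> k))"
  proof (intro sum.cong refl)
    fix j k assume "j \<in> H" "k \<in> H"
    hence "j \<otimes> y \<otimes> k \<in> carrier W" using y Hmem by simp
    thus "(\<Sum>w\<in>carrier W. (if j \<otimes> y \<otimes> k = w then \<phi> (inv j) * \<phi> (inv k) * g w else 0)) = \<phi> (inv j) * \<phi> (inv k) * g (j \<otimes> y \<otimes> k)"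
      using finW by (simp add: sum.delta)
  qed
  finally show ?thesis .
qed

lemma fy_beq: assumes y: "y \<in> carrier W" shows "beq (fy y)"
  unfolding beq_def
proof (intro ballI)
  fix a b w assume a: "a \<in> H" and b: "b \<in> H" and w: "w \<in> carrier W"
  have am: "a \<in> carrier W" "b \<in> carrier W" using a b Hmem by auto
  have "fy y (a \<otimes> w \<otimes> b) = (\<Sum>j\<in>H. \<Sum>k\<in>H. if (a \<otimes> j) \<otimes> y \<otimes> (k \<otimes> b) = a \<otimes> w \<otimes> b then \<phi> (inv (a \<otimes> j)) * \<phi> (inv (k \<otimes> b)) else 0)"
  proof -
    define T where "T = (\<lambda>j k. if j \<otimes> y \<otimes> k = a \<otimes> w \<otimes> b then \<phi> (inv j) * \<phi> (inv k) else 0)"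
    have "fy y (a \<otimes> w \<otimes> b) = (\<Sum>j\<in>H. \<Sum>k\<in>H. T j k)" unfolding fy_def T_def ..
    also have "\<dots> = (\<Sum>j\<in>H. \<Sum>k\<in>H. T (a \<otimes> j) k)"
      by (rule sum.reindex_bij_betw[OF bij_lmult_sub[OF sub a], of "\<lambda>j. \<Sum>k\<in>H. T j k", symmetric])
    also have "\<dots> = (\<Sum>j\<in>H. \<Sum>k\<in>H. T (a \<otimes> j) (k \<otimes> b))"
      by (rule sum.cong[OF refl], rule sum.reindex_bij_betw[OF bij_rmult_sub[OF sub b], of "\<lambda>k. T _ k", symmetric])
    finally show ?thesis unfolding T_def .
  qed
  also have "\<dots> = (\<Sum>j\<in>H. \<Sum>k\<in>H. \<phi> (inv a) * \<phi> (inv b) * (if j \<otimes> y \<otimes> k = w then \<phi> (inv j) * \<phi> (inv k) else 0))"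
  proof (intro sum.cong refl)
    fix j k assume j: "j \<in> H" and k: "k \<in> H"
    have jm: "j \<in> carrier W" "k \<in> carrier W" using j k Hmem by auto
    have e1: "(a \<otimes> j) \<otimes> y \<otimes> (k \<otimes> b) = a \<otimes> (j \<otimes> y \<otimes> k) \<otimes> b" using am jm y by (simp add: m_assoc)
    have e2: "(a \<otimes> (j \<otimes> y \<otimes> k) \<otimes> b = a \<otimes> w \<otimes> b) \<longleftrightarrow> j \<otimes> y \<otimes> k = w"
      using am jm y w by simp
    show "(if (a \<otimes> j) \<otimes> y \<otimes> (k \<otimes> b) = a \<otimes> w \<otimes> b then \<phi> (inv (a \<otimes> j)) * \<phi> (inv (k \<otimes> b)) else 0) =
          \<phi> (inv a) * \<phi> (inv b) * (if j \<otimes> y \<otimes> k = w then \<phi> (inv j) * \<phi> (inv k) else 0)"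
      unfolding e1 e2 using \<phi>inv_mult[OF a j] \<phi>inv_mult[OF k b] by (simp add: ac_simps)
  qed
  also have "\<dots> = \<phi> (inv a) * \<phi> (inv b) * fy y w" unfolding fy_def by (simp add: sum_distrib_left)
  finally show "fy y (a \<otimes> w \<otimes> b) = \<phi> (inv a) * \<phi> (inv b) * fy y w" .
qed

end

context hk begin

definition Ssum :: "('a \<Rightarrow> complex) \<Rightarrow> 'a \<Rightarrow> 'a \<Rightarrow> complex" where
  "Ssum F y x = (\<Sum>m\<in>H. \<phi> (inv m) * (\<Sum>h\<in>H. \<phi> (inv h) * F (y \<otimes> m \<otimes> x \<otimes> h)))"

lemma double_A:
  assumes F: "\<And>h z. h \<in> H \<Longrightarrow> z \<in> carrier W \<Longrightarrow> F (h \<otimes> z) = \<phi> h * F z"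
    and x: "x \<in> carrier W" and y: "y \<in> carrier W"
  shows "(\<Sum>w\<in>carrier W. fy y w * (\<Sum>u\<in>carrier W. fy x u * F (w \<otimes> u))) = of_nat (card H) * of_nat (card H) * Ssum F y x"
proof -
  define G where "G = (\<lambda>m. \<Sum>h\<in>H. \<phi> (inv h) * F (y \<otimes> m \<otimes> x \<otimes> h))"
  have "(\<Sum>w\<in>carrier W. fy y w * (\<Sum>u\<in>carrier W. fy x u * F (w \<otimes> u)))
     = (\<Sum>j\<in>H. \<Sum>k\<in>H. \<phi> (inv j) * \<phi> (inv k) * (\<Sum>u\<in>carrier W. fy x u * F (j \<otimes> y \<otimes> k \<otimes> u)))"
    by (rule sum_fy[OF y])
  also have "\<dots> = (\<Sum>j\<in>H. \<Sum>k\<in>H. \<phi> (inv j) * \<phi> (inv k) * (\<Sum>j'\<in>H. \<Sum>h\<in>H. \<phi> (inv j') * \<phi> (inv h) * F (j \<otimes> y \<otimes> k \<otimes> (j' \<otimes> x \<otimes> h))))"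
    by (intro sum.cong refl arg_cong2[where f="(*)"] sum_fy[OF x])
  also have "\<dots> = (\<Sum>j\<in>H. \<Sum>k\<in>H. \<Sum>j'\<in>H. \<phi> (inv (k \<otimes> j')) * G (k \<otimes> j'))"
  proof (intro sum.cong refl)
    fix j k assume j: "j \<in> H" and k: "k \<in> H"
    have jm: "j \<in> carrier W" "k \<in> carrier W" using j k Hmem by auto
    have "\<phi> (inv j) * \<phi> (inv k) * (\<Sum>j'\<in>H. \<Sum>h\<in>H. \<phi> (inv j') * \<phi> (inv h) * F (j \<otimes> y \<otimes> k \<otimes> (j' \<otimes> x \<otimes> h)))
       = (\<Sum>j'\<in>H. \<phi> (inv j) * \<phi> (inv k) * (\<Sum>h\<in>H. \<phi> (inv j') * \<phi> (inv h) * F (j \<otimes> y \<otimes> k \<otimes> (j' \<otimes> x \<otimes> h))))"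
      by (simp add: sum_distrib_left)
    also have "\<dots> = (\<Sum>j'\<in>H. \<phi> (inv (k \<otimes> j')) * G (k \<otimes> j'))"
    proof (intro sum.cong refl)
      fix j' assume j': "j' \<in> H"
      have j'm: "j' \<in> carrier W" using j' Hmem by auto
      have "(\<Sum>h\<in>H. \<phi> (inv j') * \<phi> (inv h) * F (j \<otimes> y \<otimes> k \<otimes> (j' \<otimes> x \<otimes> h)))
          = (\<Sum>h\<in>H. \<phi> j * (\<phi> (inv j') * (\<phi> (inv h) * F (y \<otimes> (k \<otimes> j') \<otimes> x \<otimes> h))))"
      proof (intro sum.cong refl)
        fix h assume h: "h \<in> H"
        have hm: "h \<in> carrier W" using h Hmem by auto
        have "j \<otimes> y \<otimes> k \<otimes> (j' \<otimes> x \<otimes> h) = j \<otimes> (y \<otimes> (k \<otimes> j') \<otimes> x \<otimes> h)"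
          using jm j'm hm x y by (simp add: m_assoc)
        thus "\<phi> (inv j') * \<phi> (inv h) * F (j \<otimes> y \<otimes> k \<otimes> (j' \<otimes> x \<otimes> h)) = \<phi> j * (\<phi> (inv j') * (\<phi> (inv h) * F (y \<otimes> (k \<otimes> j') \<otimes> x \<otimes> h)))"
          using F[OF j, of "y \<otimes> (k \<otimes> j') \<otimes> x \<otimes> h"] jm j'm hm x y by (simp add: ac_simps)
      qed
      also have "\<dots> = \<phi> j * \<phi> (inv j') * G (k \<otimes> j')"
        unfolding G_def by (simp add: sum_distrib_left ac_simps)
      finally have e: "(\<Sum>h\<in>H. \<phi> (inv j') * \<phi> (inv h) * F (j \<otimes> y \<otimes> k \<otimes> (j' \<otimes> x \<otimes> h))) = \<phi> j * \<phi> (inv j') * G (k \<otimes> j')" .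
      have "\<phi> (inv j) * \<phi> (inv k) * (\<Sum>h\<in>H. \<phi> (inv j') * \<phi> (inv h) * F (j \<otimes> y \<otimes> k \<otimes> (j' \<otimes> x \<otimes> h)))
          = (\<phi> (inv j) * \<phi> j) * (\<phi> (inv k) * \<phi> (inv j')) * G (k \<otimes> j')"
        unfolding e by (simp add: ac_simps)
      also have "\<dots> = \<phi> (inv (k \<otimes> j')) * G (k \<otimes> j')"
        using \<phi>inv[OF j] \<phi>inv_mult[OF k j'] by simp
      finally show "\<phi> (inv j) * \<phi> (inv k) * (\<Sum>h\<in>H. \<phi> (inv j') * \<phi> (inv h) * F (j \<otimes> y \<otimes> k \<otimes> (j' \<otimes> x \<otimes> h))) = \<phi> (inv (k \<otimes> j')) * G (k \<otimes> j')" .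
    qed
    finally show "\<phi> (inv j) * \<phi> (inv k) * (\<Sum>j'\<in>H. \<Sum>h\<in>H. \<phi> (inv j') * \<phi> (inv h) * F (j \<otimes> y \<otimes> k \<otimes> (j' \<otimes> x \<otimes> h))) = (\<Sum>j'\<in>H. \<phi> (inv (k \<otimes> j')) * G (k \<otimes> j'))" .
  qed
  also have "\<dots> = (\<Sum>j\<in>H. \<Sum>k\<in>H. \<Sum>m\<in>H. \<phi> (inv m) * G m)"
  proof (rule sum.cong[OF refl], rule sum.cong[OF refl])
    fix j k assume j: "j \<in> H" and k: "k \<in> H"
    show "(\<Sum>j'\<in>H. \<phi> (inv (k \<otimes> j')) * G (k \<otimes> j')) = (\<Sum>m\<in>H. \<phi> (inv m) * G m)"
      by (rule sum.reindex_bij_betw[OF bij_lmult_sub[OF sub k], of "\<lambda>m. \<phi> (inv m) * G m"])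
  qed
  also have "\<dots> = of_nat (card H) * of_nat (card H) * Ssum F y x"
    unfolding Ssum_def G_def by simp
  finally show ?thesis .
qed

lemma double_B:
  shows "(\<Sum>w\<in>carrier W. fy y w * (\<Sum>u\<in>carrier W. fy x u * F (w \<otimes> u))) = (\<Sum>z\<in>carrier W. conv (fy y) (fy x) z * F z)"
proof -
  have "(\<Sum>w\<in>carrier W. fy y w * (\<Sum>u\<in>carrier W. fy x u * F (w \<otimes> u)))
      = (\<Sum>w\<in>carrier W. fy y w * (\<Sum>z\<in>carrier W. fy x (inv w \<otimes> z) * F (w \<otimes> (inv w \<otimes> z))))"
  proof (rule sum.cong[OF refl], rule arg_cong2[where f="(*)"], rule refl)
    fix w assume w: "w \<in> carrier W"
    show "(\<Sum>u\<in>carrier W. fy x u * F (w \<otimes> u)) = (\<Sum>z\<in>carrier W. fy x (inv w \<otimes> z) * F (w \<otimes> (inv w \<otimes> z)))"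
      by (rule sum.reindex_bij_betw[OF bij_lmult_car[OF inv_closed[OF w]], of "\<lambda>u. fy x u * F (w \<otimes> u)", symmetric])
  qed
  also have "\<dots> = (\<Sum>w\<in>carrier W. \<Sum>z\<in>carrier W. fy y w * fy x (inv w \<otimes> z) * F z)"
    by (intro sum.cong refl) (simp add: sum_distrib_left rinv_assoc ac_simps)
  also have "\<dots> = (\<Sum>z\<in>carrier W. \<Sum>w\<in>carrier W. fy y w * fy x (inv w \<otimes> z) * F z)"
    by (rule sum.swap)
  also have "\<dots> = (\<Sum>z\<in>carrier W. conv (fy y) (fy x) z * F z)"
    unfolding conv_def by (simp add: sum_distrib_right)
  finally show ?thesis .
qed

lemma Ssum_comm:
  assumes F: "\<And>h z. h \<in> H \<Longrightarrow> z \<in> carrier W \<Longrightarrow> F (h \<otimes> z) = \<phi> h * F z"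
    and x: "x \<in> carrier W" and y: "y \<in> carrier W"
  shows "Ssum F y x = Ssum F x y"
proof -
  have "of_nat (card H) * of_nat (card H) * Ssum F y x = (\<Sum>z\<in>carrier W. conv (fy y) (fy x) z * F z)"
    using double_A[OF F x y] double_B[of y x F] by simp
  also have "\<dots> = (\<Sum>z\<in>carrier W. conv (fy x) (fy y) z * F z)"
    by (intro sum.cong refl) (simp add: conv_comm[OF fy_beq[OF y] fy_beq[OF x]])
  also have "\<dots> = of_nat (card H) * of_nat (card H) * Ssum F x y"
    using double_A[OF F y x] double_B[of x y F] by simp
  finally show ?thesis using Hne by simp
qed

end

lemma strict_upper_pow:
  assumes B: "B \<in> carrier_mat n n" and up: "\<And>i j. i < n \<Longrightarrow> j < n \<Longrightarrow> j \<le> i \<Longrightarrow> B $$ (i, j) = 0"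
  shows "i < n \<Longrightarrow> j < n \<Longrightarrow> j < i + k \<Longrightarrow> (B ^\<^sub>m k) $$ (i, j) = (0 :: 'a :: comm_ring_1)"
proof (induction k arbitrary: i j)
  case 0
  thus ?case using B by simp
next
  case (Suc k)
  have Bk: "B ^\<^sub>m k \<in> carrier_mat n n" using B by simp
  have "(B ^\<^sub>m Suc k) $$ (i, j) = row (B ^\<^sub>m k) i \<bullet> col B j" using Suc.prems Bk B by simp
  also have "\<dots> = (\<Sum>l\<in>{0..<n}. (B ^\<^sub>m k) $$ (i, l) * B $$ (l, j))"
    unfolding scalar_prod_def using Bk B Suc.prems by (intro sum.cong) auto
  also have "\<dots> = 0"
  proof (rule sum.neutral, rule ballI)
    fix l assume l: "l \<in> {0..<n}"
    show "(B ^\<^sub>m k) $$ (i, l) * B $$ (l, j) = 0"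
    proof (cases "l < i + k")
      case True thus ?thesis using Suc.IH[of i l] Suc.prems l by simp
    next
      case False thus ?thesis using up[of l j] Suc.prems l by simp
    qed
  qed
  finally show ?case .
qed

lemma eig_or_nilp:
  fixes A :: "complex mat"
  assumes A: "A \<in> carrier_mat n n"
  shows "(\<exists>e v. e \<noteq> 0 \<and> eigenvector A v e) \<or> A ^\<^sub>m n = 0\<^sub>m n n"
proof -
  obtain as where cA: "char_poly A = (\<Prod>a\<leftarrow>as. [:- a, 1:])" and len: "length as = n"
    using char_poly_factorized[OF A] by blast
  obtain B P Q where sd: "schur_decomposition A as = (B, P, Q)" by (cases "schur_decomposition A as") auto
  from schur_decomposition[OF A cA sd] have sim: "similar_mat_wit A B P Q" and ut: "upper_triangular B"
    and dg: "diag_mat B = as" by auto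
  note D = similar_mat_witD2[OF A sim]
  show ?thesis
  proof (cases "\<exists>a\<in>set as. a \<noteq> 0")
    case True
    then obtain a where a: "a \<in> set as" "a \<noteq> 0" by blast
    have "poly (char_poly A) a = 0" unfolding cA using a(1) by (rule linear_poly_root)
    hence "eigenvalue A a" using eigenvalue_root_char_poly[OF A] by simp
    thus ?thesis using a(2) unfolding eigenvalue_def by blast
  next
    case False
    have diag0: "\<And>i. i < n \<Longrightarrow> B $$ (i, i) = 0"
    proof -
      fix i assume i: "i < n"
      have "diag_mat B ! i = B $$ (i, i)" using D(5) i by (simp add: diag_mat_def)
      moreover have "diag_mat B ! i \<in> set as" using dg i len by (metis nth_mem)
      ultimately show "B $$ (i, i) = 0" using False by auto
    qed
    have up: "\<And>i j. i < n \<Longrightarrow> j < n \<Longrightarrow> j \<le> i \<Longrightarrow> B $$ (i, j) = 0"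
    proof -
      fix i j assume "i < n" "j < n" "j \<le> i"
      thus "B $$ (i, j) = 0" using diag0 ut D(5) unfolding upper_triangular_def
        by (cases "j = i") auto
    qed
    have Bn: "B ^\<^sub>m n = 0\<^sub>m n n"
      by (rule eq_matI) (use D(5) strict_upper_pow[OF D(5) up] in auto)
    have "A ^\<^sub>m n = P * B ^\<^sub>m n * Q" by (rule similar_mat_wit_pow_id[OF sim])
    also have "\<dots> = 0\<^sub>m n n" unfolding Bn using D(6,7) by (simp add: right_mult_zero_mat left_mult_zero_mat)
    finally show ?thesis by blast
  qed
qed

lemma linear_char_one: assumes "group G" "linear_char G \<xi>" shows "\<xi> \<one>\<^bsub>G\<^esub> = 1"
proof -
  interpret G: group G by fact
  have "\<xi> \<one>\<^bsub>G\<^esub> = \<xi> \<one>\<^bsub>G\<^esub> * \<xi> \<one>\<^bsub>G\<^esub>" using assms(2) unfolding linear_char_def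
    by (metis G.l_one G.one_closed)
  moreover have "\<xi> \<one>\<^bsub>G\<^esub> \<noteq> 0" using assms(2) unfolding linear_char_def by blast
  ultimately show ?thesis by (metis mult_cancel_right1)
qed

lemma linear_char_inv: assumes "group G" "linear_char G \<xi>" "g \<in> carrier G"
  shows "\<xi> (inv\<^bsub>G\<^esub> g) * \<xi> g = 1"
proof -
  interpret G: group G by fact
  have "\<xi> (inv\<^bsub>G\<^esub> g \<otimes>\<^bsub>G\<^esub> g) = \<xi> (inv\<^bsub>G\<^esub> g) * \<xi> g"
    using assms(2,3) G.inv_closed unfolding linear_char_def by blast
  moreover have "inv\<^bsub>G\<^esub> g \<otimes>\<^bsub>G\<^esub> g = \<one>\<^bsub>G\<^esub>" using assms(3) by simp
  ultimately show ?thesis using linear_char_one[OF assms(1,2)] by simp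
qed

lemma eps_facts: assumes "\<epsilon> = (\<lambda>s. 1) \<or> \<epsilon> = (\<lambda>s. of_int (sign s))"
  shows "\<epsilon> id = (1::complex)" "\<epsilon> sw * \<epsilon> sw = 1"
    "\<sigma> \<in> {id, sw} \<Longrightarrow> \<tau> \<in> {id, sw} \<Longrightarrow> \<epsilon> (\<sigma> \<circ> \<tau>) = \<epsilon> \<sigma> * \<epsilon> \<tau>"
  using assms by (auto simp: sign_sw)

lemma winv_id: assumes "group G" "a \<in> carrier G" "b \<in> carrier G"
  shows "inv\<^bsub>wreath2 G\<^esub> (a, b, id) = (inv\<^bsub>G\<^esub> a, inv\<^bsub>G\<^esub> b, id)"
proof -
  interpret G: group G by fact
  interpret W: group "wreath2 G" by (rule wreath2_group[OF assms(1)])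
  show ?thesis
    by (rule W.inv_equality) (use assms(2,3) in \<open>auto simp: wcarrier wmult_id wone\<close>)
qed

lemma winv_sw: assumes "group G" "a \<in> carrier G" "b \<in> carrier G"
  shows "inv\<^bsub>wreath2 G\<^esub> (a, b, sw) = (inv\<^bsub>G\<^esub> b, inv\<^bsub>G\<^esub> a, sw)"
proof -
  interpret G: group G by fact
  interpret W: group "wreath2 G" by (rule wreath2_group[OF assms(1)])
  show ?thesis
    by (rule W.inv_equality) (use assms(2,3) in \<open>auto simp: wcarrier wmult_sw wone\<close>)
qed

lemma diag_sub: assumes "group G" shows "subgroup (diag_wreath2 G) (wreath2 G)"
proof -
  interpret G: group G by fact
  interpret W: group "wreath2 G" by (rule wreath2_group[OF assms(1)])
  show ?thesis
  proof
    show "diag_wreath2 G \<subseteq> carrier (wreath2 G)"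
      by (auto simp: diag_wreath2_def wcarrier S2_carrier)
    show "\<one>\<^bsub>wreath2 G\<^esub> \<in> diag_wreath2 G" by (auto simp: diag_wreath2_def wone S2_carrier)
  next
    fix x y assume "x \<in> diag_wreath2 G" "y \<in> diag_wreath2 G"
    thus "x \<otimes>\<^bsub>wreath2 G\<^esub> y \<in> diag_wreath2 G"
      by (auto simp: diag_wreath2_def S2_carrier wmult_id wmult_sw)
  next
    fix x assume "x \<in> diag_wreath2 G"
    thus "inv\<^bsub>wreath2 G\<^esub> x \<in> diag_wreath2 G"
      by (auto simp: diag_wreath2_def S2_carrier winv_id[OF assms] winv_sw[OF assms])
  qed
qed

definition psiW :: "('a \<Rightarrow> complex) \<Rightarrow> 'a \<times> 'a \<times> (nat \<Rightarrow> nat) \<Rightarrow> complex" where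
  "psiW \<xi> x = \<xi> (fst x) * \<xi> (fst (snd x))"

lemma hk_inst:
  assumes G: "group G" and fin: "finite (carrier G)" and xi: "linear_char G \<xi>"
    and eps: "\<epsilon> = (\<lambda>s. 1) \<or> \<epsilon> = (\<lambda>s. of_int (sign s))"
  shows "hk (wreath2 G) (diag_wreath2 G) (tensor_char \<xi> \<epsilon>) (psiW \<xi>) (\<one>\<^bsub>G\<^esub>, \<one>\<^bsub>G\<^esub>, sw)"
proof -
  interpret G: group G by fact
  interpret W: group "wreath2 G" by (rule wreath2_group[OF G])
  have xm: "\<And>a b. a \<in> carrier G \<Longrightarrow> b \<in> carrier G \<Longrightarrow> \<xi> (a \<otimes>\<^bsub>G\<^esub> b) = \<xi> a * \<xi> b"
    using xi unfolding linear_char_def by blast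
  have xnz: "\<And>a. a \<in> carrier G \<Longrightarrow> \<xi> a \<noteq> 0" using xi unfolding linear_char_def by blast
  have xinv: "\<And>a. a \<in> carrier G \<Longrightarrow> \<xi> (inv\<^bsub>G\<^esub> a) * \<xi> a = 1" using linear_char_inv[OF G xi] by blast
  have xinv': "\<And>a. a \<in> carrier G \<Longrightarrow> \<xi> a * \<xi> (inv\<^bsub>G\<^esub> a) = 1" using xinv by (simp add: mult.commute)
  note ef = eps_facts[OF eps]
  have finW: "finite (carrier (wreath2 G))"
  proof -
    have "carrier (wreath2 G) \<subseteq> carrier G \<times> carrier G \<times> {id, sw}"
      by (auto simp: wcarrier)
    thus ?thesis by (rule finite_subset) (use fin in simp)
  qed
  show ?thesis
  proof (rule hk.intro[OF wreath2_group[OF G]], rule hk_axioms.intro)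
    show "finite (carrier (wreath2 G))" by fact
    show "subgroup (diag_wreath2 G) (wreath2 G)" by (rule diag_sub[OF G])
  next
    fix a b assume "a \<in> diag_wreath2 G" "b \<in> diag_wreath2 G"
    thus "tensor_char \<xi> \<epsilon> (a \<otimes>\<^bsub>wreath2 G\<^esub> b) = tensor_char \<xi> \<epsilon> a * tensor_char \<xi> \<epsilon> b"
      by (auto simp: diag_wreath2_def S2_carrier wmult_id wmult_sw tensor_char_def xm ef ac_simps)
  next
    fix h assume "h \<in> diag_wreath2 G"
    thus "tensor_char \<xi> \<epsilon> (inv\<^bsub>wreath2 G\<^esub> h) * tensor_char \<xi> \<epsilon> h = 1"
      using ef(2) by (auto simp: diag_wreath2_def S2_carrier winv_id[OF G] winv_sw[OF G] tensor_char_def ef(1)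
          xinv mult.assoc mult.left_commute[of "\<epsilon> sw"])
  next
    fix a b assume "a \<in> carrier (wreath2 G)" "b \<in> carrier (wreath2 G)"
    thus "psiW \<xi> (a \<otimes>\<^bsub>wreath2 G\<^esub> b) = psiW \<xi> a * psiW \<xi> b"
      by (cases a; cases b) (auto simp: wcarrier wmult_id wmult_sw psiW_def xm ac_simps)
  next
    fix a assume "a \<in> carrier (wreath2 G)"
    thus "psiW \<xi> a \<noteq> 0" by (cases a) (auto simp: wcarrier psiW_def xnz)
  next
    show "(\<one>\<^bsub>G\<^esub>, \<one>\<^bsub>G\<^esub>, sw) \<in> carrier (wreath2 G)" by (simp add: wcarrier)
    show "(\<one>\<^bsub>G\<^esub>, \<one>\<^bsub>G\<^esub>, sw) \<otimes>\<^bsub>wreath2 G\<^esub> (\<one>\<^bsub>G\<^esub>, \<one>\<^bsub>G\<^esub>, sw) = \<one>\<^bsub>wreath2 G\<^esub>"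
      by (simp add: wmult_sw wone)
  next
    fix w assume w: "w \<in> carrier (wreath2 G)"
    obtain a b \<sigma> where we: "w = (a, b, \<sigma>)" by (cases w)
    have a: "a \<in> carrier G" and b: "b \<in> carrier G" and \<sigma>: "\<sigma> = id \<or> \<sigma> = sw" using w we by (auto simp: wcarrier)
    let ?s = "(\<one>\<^bsub>G\<^esub>, \<one>\<^bsub>G\<^esub>, sw)"
    show "\<exists>h1\<in>diag_wreath2 G. \<exists>h2\<in>diag_wreath2 G.
            ?s \<otimes>\<^bsub>wreath2 G\<^esub> inv\<^bsub>wreath2 G\<^esub> w \<otimes>\<^bsub>wreath2 G\<^esub> ?s = h1 \<otimes>\<^bsub>wreath2 G\<^esub> w \<otimes>\<^bsub>wreath2 G\<^esub> h2 \<and>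
            tensor_char \<xi> \<epsilon> (inv\<^bsub>wreath2 G\<^esub> h1) * tensor_char \<xi> \<epsilon> (inv\<^bsub>wreath2 G\<^esub> h2) = psiW \<xi> w"
    proof (cases "\<sigma> = id")
      case True
      have e1: "inv\<^bsub>G\<^esub> b \<otimes>\<^bsub>G\<^esub> a \<otimes>\<^bsub>G\<^esub> inv\<^bsub>G\<^esub> a = inv\<^bsub>G\<^esub> b"
        using a b by (simp add: G.m_assoc)
      have e2: "inv\<^bsub>G\<^esub> b \<otimes>\<^bsub>G\<^esub> b \<otimes>\<^bsub>G\<^esub> inv\<^bsub>G\<^esub> a = inv\<^bsub>G\<^esub> a"
        using a b by simp
      have ib: "inv\<^bsub>G\<^esub> b \<in> carrier G" and ia: "inv\<^bsub>G\<^esub> a \<in> carrier G" using a b by auto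
      have L: "?s \<otimes>\<^bsub>wreath2 G\<^esub> inv\<^bsub>wreath2 G\<^esub> w \<otimes>\<^bsub>wreath2 G\<^esub> ?s = (inv\<^bsub>G\<^esub> b, inv\<^bsub>G\<^esub> a, id)"
        unfolding we True winv_id[OF G a b] wmult_sw using ia ib by (simp add: wmult_sw)
      have R: "(inv\<^bsub>G\<^esub> b, inv\<^bsub>G\<^esub> b, id) \<otimes>\<^bsub>wreath2 G\<^esub> w \<otimes>\<^bsub>wreath2 G\<^esub> (inv\<^bsub>G\<^esub> a, inv\<^bsub>G\<^esub> a, id) = (inv\<^bsub>G\<^esub> b, inv\<^bsub>G\<^esub> a, id)"
        unfolding we True wmult_id e1 e2 ..
      have P: "tensor_char \<xi> \<epsilon> (inv\<^bsub>wreath2 G\<^esub> (inv\<^bsub>G\<^esub> b, inv\<^bsub>G\<^esub> b, id)) * tensor_char \<xi> \<epsilon> (inv\<^bsub>wreath2 G\<^esub> (inv\<^bsub>G\<^esub> a, inv\<^bsub>G\<^esub> a, id)) = psiW \<xi> w"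
        unfolding winv_id[OF G ib ib] winv_id[OF G ia ia] using a b
        by (simp add: tensor_char_def ef(1) psiW_def we mult.commute)
      have D: "(inv\<^bsub>G\<^esub> b, inv\<^bsub>G\<^esub> b, id) \<in> diag_wreath2 G" "(inv\<^bsub>G\<^esub> a, inv\<^bsub>G\<^esub> a, id) \<in> diag_wreath2 G"
        using ia ib by (auto simp: diag_wreath2_def S2_carrier)
      show ?thesis
      proof (rule bexI[where x="(inv\<^bsub>G\<^esub> b, inv\<^bsub>G\<^esub> b, id)"], rule bexI[where x="(inv\<^bsub>G\<^esub> a, inv\<^bsub>G\<^esub> a, id)"])
        show "?s \<otimes>\<^bsub>wreath2 G\<^esub> inv\<^bsub>wreath2 G\<^esub> w \<otimes>\<^bsub>wreath2 G\<^esub> ?s = (inv\<^bsub>G\<^esub> b, inv\<^bsub>G\<^esub> b, id) \<otimes>\<^bsub>wreath2 G\<^esub> w \<otimes>\<^bsub>wreath2 G\<^esub> (inv\<^bsub>G\<^esub> a, inv\<^bsub>G\<^esub> a, id) \<and>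
            tensor_char \<xi> \<epsilon> (inv\<^bsub>wreath2 G\<^esub> (inv\<^bsub>G\<^esub> b, inv\<^bsub>G\<^esub> b, id)) * tensor_char \<xi> \<epsilon> (inv\<^bsub>wreath2 G\<^esub> (inv\<^bsub>G\<^esub> a, inv\<^bsub>G\<^esub> a, id)) = psiW \<xi> w"
          using L R P by (intro conjI) simp_all
      qed (use D in auto)
    next
      case False
      hence S: "\<sigma> = sw" using \<sigma> by auto
      have ib: "inv\<^bsub>G\<^esub> b \<in> carrier G" and ia: "inv\<^bsub>G\<^esub> a \<in> carrier G" using a b by auto
      have e1: "inv\<^bsub>G\<^esub> b \<otimes>\<^bsub>G\<^esub> a \<otimes>\<^bsub>G\<^esub> inv\<^bsub>G\<^esub> a = inv\<^bsub>G\<^esub> b"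
        using a b by (simp add: G.m_assoc)
      have e2: "inv\<^bsub>G\<^esub> b \<otimes>\<^bsub>G\<^esub> b = \<one>\<^bsub>G\<^esub>" using b by simp
      have L: "?s \<otimes>\<^bsub>wreath2 G\<^esub> inv\<^bsub>wreath2 G\<^esub> w \<otimes>\<^bsub>wreath2 G\<^esub> ?s = (inv\<^bsub>G\<^esub> a, inv\<^bsub>G\<^esub> b, sw)"
        unfolding we S winv_sw[OF G a b] wmult_sw using ia ib by (simp add: wmult_id)
      have R: "(inv\<^bsub>G\<^esub> b, inv\<^bsub>G\<^esub> b, sw) \<otimes>\<^bsub>wreath2 G\<^esub> w \<otimes>\<^bsub>wreath2 G\<^esub> (inv\<^bsub>G\<^esub> a, inv\<^bsub>G\<^esub> a, sw) = (inv\<^bsub>G\<^esub> a, inv\<^bsub>G\<^esub> b, sw)"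
        unfolding we S wmult_sw e2 sw_sw wmult_id e1 using ia by simp
      have P: "tensor_char \<xi> \<epsilon> (inv\<^bsub>wreath2 G\<^esub> (inv\<^bsub>G\<^esub> b, inv\<^bsub>G\<^esub> b, sw)) * tensor_char \<xi> \<epsilon> (inv\<^bsub>wreath2 G\<^esub> (inv\<^bsub>G\<^esub> a, inv\<^bsub>G\<^esub> a, sw)) = psiW \<xi> w"
      proof -
        have "tensor_char \<xi> \<epsilon> (inv\<^bsub>wreath2 G\<^esub> (inv\<^bsub>G\<^esub> b, inv\<^bsub>G\<^esub> b, sw)) * tensor_char \<xi> \<epsilon> (inv\<^bsub>wreath2 G\<^esub> (inv\<^bsub>G\<^esub> a, inv\<^bsub>G\<^esub> a, sw))
            = (\<xi> b * \<epsilon> sw) * (\<xi> a * \<epsilon> sw)"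
          unfolding winv_sw[OF G ib ib] winv_sw[OF G ia ia] using a b by (simp add: tensor_char_def)
        also have "\<dots> = \<xi> a * \<xi> b * (\<epsilon> sw * \<epsilon> sw)" by (simp only: ac_simps)
        also have "\<dots> = psiW \<xi> w" using ef(2) by (simp add: psiW_def we)
        finally show ?thesis .
      qed
      have D: "(inv\<^bsub>G\<^esub> b, inv\<^bsub>G\<^esub> b, sw) \<in> diag_wreath2 G" "(inv\<^bsub>G\<^esub> a, inv\<^bsub>G\<^esub> a, sw) \<in> diag_wreath2 G"
        using ia ib by (auto simp: diag_wreath2_def S2_carrier)
      show ?thesis
      proof (rule bexI[where x="(inv\<^bsub>G\<^esub> b, inv\<^bsub>G\<^esub> b, sw)"], rule bexI[where x="(inv\<^bsub>G\<^esub> a, inv\<^bsub>G\<^esub> a, sw)"])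
        show "?s \<otimes>\<^bsub>wreath2 G\<^esub> inv\<^bsub>wreath2 G\<^esub> w \<otimes>\<^bsub>wreath2 G\<^esub> ?s = (inv\<^bsub>G\<^esub> b, inv\<^bsub>G\<^esub> b, sw) \<otimes>\<^bsub>wreath2 G\<^esub> w \<otimes>\<^bsub>wreath2 G\<^esub> (inv\<^bsub>G\<^esub> a, inv\<^bsub>G\<^esub> a, sw) \<and>
            tensor_char \<xi> \<epsilon> (inv\<^bsub>wreath2 G\<^esub> (inv\<^bsub>G\<^esub> b, inv\<^bsub>G\<^esub> b, sw)) * tensor_char \<xi> \<epsilon> (inv\<^bsub>wreath2 G\<^esub> (inv\<^bsub>G\<^esub> a, inv\<^bsub>G\<^esub> a, sw)) = psiW \<xi> w"
          using L R P by (intro conjI) simp_all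
      qed (use D in auto)
    qed
  qed
qed

lemma vec_eq_scal:
  fixes a b :: "'a :: comm_ring_1 vec"
  assumes a: "a \<in> carrier_vec n" and b: "b \<in> carrier_vec n" and e: "\<And>v. v \<in> carrier_vec n \<Longrightarrow> a \<bullet> v = b \<bullet> v"
  shows "a = b"
proof (rule eq_vecI)
  fix i assume "i < dim_vec b"
  hence i: "i < n" using b by simp
  have "a \<bullet> unit_vec n i = b \<bullet> unit_vec n i" using e[of "unit_vec n i"] by simp
  thus "a $ i = b $ i" using i by (simp add: scalar_prod_right_unit)
qed (use a b in simp)

locale rp = hk W H \<phi> \<psi> s for W (structure) and H \<phi> \<psi> s +
  fixes n :: nat and \<rho> :: "'a \<Rightarrow> complex mat"
  assumes irr: "irred_rep W n \<rho>"
begin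

lemma rc: "x \<in> carrier W \<Longrightarrow> \<rho> x \<in> carrier_mat n n"
  using irr unfolding irred_rep_def mat_rep_def by simp
lemma rone: "\<rho> \<one> = 1\<^sub>m n"
  using irr unfolding irred_rep_def mat_rep_def by simp
lemma rmul: "x \<in> carrier W \<Longrightarrow> y \<in> carrier W \<Longrightarrow> \<rho> (x \<otimes> y) = \<rho> x * \<rho> y"
  using irr unfolding irred_rep_def mat_rep_def by simp
lemma rmulv: assumes x: "x \<in> carrier W" and y: "y \<in> carrier W" and v: "v \<in> carrier_vec n"
  shows "\<rho> (x \<otimes> y) *\<^sub>v v = \<rho> x *\<^sub>v (\<rho> y *\<^sub>v v)"
  using rmul[OF x y] assoc_mult_mat_vec[OF rc[OF x] rc[OF y] v] by simp

lemma rv_car[simp]: "x \<in> carrier W \<Longrightarrow> v \<in> carrier_vec n \<Longrightarrow> \<rho> x *\<^sub>v v \<in> carrier_vec n"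
  using mult_mat_vec_carrier[OF rc] by blast

definition Qm :: "complex mat" where
  "Qm = mat n n (\<lambda>(i, j). \<Sum>h\<in>H. \<phi> (inv h) * \<rho> h $$ (i, j))"

lemma Qm_car[simp]: "Qm \<in> carrier_mat n n" unfolding Qm_def by simp

lemma Qv_car[simp]: "v \<in> carrier_vec n \<Longrightarrow> Qm *\<^sub>v v \<in> carrier_vec n"
  using mult_mat_vec_carrier[OF Qm_car] by blast

lemma rQ_car: "x \<in> carrier W \<Longrightarrow> \<rho> x * Qm \<in> carrier_mat n n"
  using mult_carrier_mat[OF rc Qm_car] by blast

lemma Qscal: assumes l: "l \<in> carrier_vec n" and v: "v \<in> carrier_vec n"
  shows "l \<bullet> (Qm *\<^sub>v v) = (\<Sum>h\<in>H. \<phi> (inv h) * (l \<bullet> (\<rho> h *\<^sub>v v)))"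
proof -
  have "l \<bullet> (Qm *\<^sub>v v) = (\<Sum>i=0..<n. l $ i * (\<Sum>j=0..<n. (\<Sum>h\<in>H. \<phi> (inv h) * \<rho> h $$ (i, j)) * v $ j))"
    unfolding scalar_prod_def using l v
    by (intro sum.cong) (auto simp: Qm_def scalar_prod_def row_def)
  also have "\<dots> = (\<Sum>i=0..<n. \<Sum>h\<in>H. \<Sum>j=0..<n. l $ i * (\<phi> (inv h) * \<rho> h $$ (i, j) * v $ j))"
    by (intro sum.cong refl) (simp add: sum_distrib_left sum_distrib_right sum.swap[of _ H] mult.assoc)
  also have "\<dots> = (\<Sum>h\<in>H. \<Sum>i=0..<n. \<Sum>j=0..<n. l $ i * (\<phi> (inv h) * \<rho> h $$ (i, j) * v $ j))"
    by (rule sum.swap)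
  also have "\<dots> = (\<Sum>h\<in>H. \<phi> (inv h) * (l \<bullet> (\<rho> h *\<^sub>v v)))"
  proof (rule sum.cong[OF refl])
    fix h assume h: "h \<in> H"
    have rh: "\<rho> h \<in> carrier_mat n n" using rc Hmem h by blast
    have "l \<bullet> (\<rho> h *\<^sub>v v) = (\<Sum>i=0..<n. l $ i * (\<Sum>j=0..<n. \<rho> h $$ (i, j) * v $ j))"
      unfolding scalar_prod_def using l v rh
      by (intro sum.cong) (auto simp: scalar_prod_def row_def)
    thus "(\<Sum>i=0..<n. \<Sum>j=0..<n. l $ i * (\<phi> (inv h) * \<rho> h $$ (i, j) * v $ j)) = \<phi> (inv h) * (l \<bullet> (\<rho> h *\<^sub>v v))"
      by (simp add: sum_distrib_left ac_simps)
  qed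
  finally show ?thesis .
qed

definition Mx :: "'a \<Rightarrow> complex mat" where
  "Mx x = transpose_mat (\<rho> x * Qm)"

lemma Mx_car[simp]: "x \<in> carrier W \<Longrightarrow> Mx x \<in> carrier_mat n n"
  unfolding Mx_def using rQ_car by auto

lemma Mv_car[simp]: "x \<in> carrier W \<Longrightarrow> l \<in> carrier_vec n \<Longrightarrow> Mx x *\<^sub>v l \<in> carrier_vec n"
  using mult_mat_vec_carrier[OF Mx_car] by blast

lemma Mx_scal: assumes x: "x \<in> carrier W" and l: "l \<in> carrier_vec n" and v: "v \<in> carrier_vec n"
  shows "(Mx x *\<^sub>v l) \<bullet> v = l \<bullet> (\<rho> x *\<^sub>v (Qm *\<^sub>v v))"
proof -
  have A: "\<rho> x * Qm \<in> carrier_mat n n" using rQ_car[OF x] .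
  have "(Mx x *\<^sub>v l) \<bullet> v = l \<bullet> ((\<rho> x * Qm) *\<^sub>v v)"
    unfolding Mx_def by (rule transpose_vec_mult_scalar[OF A v l])
  also have "\<dots> = l \<bullet> (\<rho> x *\<^sub>v (Qm *\<^sub>v v))" using assoc_mult_mat_vec[OF rc[OF x] Qm_car v] by simp
  finally show ?thesis .
qed

lemma K1: assumes x: "x \<in> carrier W" and l: "l \<in> carrier_vec n" and u: "u \<in> carrier_vec n"
  shows "l \<bullet> (\<rho> x *\<^sub>v (Qm *\<^sub>v u)) = (\<Sum>h\<in>H. \<phi> (inv h) * (l \<bullet> (\<rho> (x \<otimes> h) *\<^sub>v u)))"
proof -
  have rx: "\<rho> x \<in> carrier_mat n n" using rc[OF x] .
  let ?l = "transpose_mat (\<rho> x) *\<^sub>v l"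
  have l': "?l \<in> carrier_vec n" using rx l by simp
  have "l \<bullet> (\<rho> x *\<^sub>v (Qm *\<^sub>v u)) = ?l \<bullet> (Qm *\<^sub>v u)"
    by (rule transpose_vec_mult_scalar[OF rx Qv_car[OF u] l, symmetric])
  also have "\<dots> = (\<Sum>h\<in>H. \<phi> (inv h) * (?l \<bullet> (\<rho> h *\<^sub>v u)))" by (rule Qscal[OF l' u])
  also have "\<dots> = (\<Sum>h\<in>H. \<phi> (inv h) * (l \<bullet> (\<rho> (x \<otimes> h) *\<^sub>v u)))"
  proof (rule sum.cong[OF refl])
    fix h assume h: "h \<in> H"
    have hm: "h \<in> carrier W" using h Hmem by blast
    have "?l \<bullet> (\<rho> h *\<^sub>v u) = l \<bullet> (\<rho> x *\<^sub>v (\<rho> h *\<^sub>v u))"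
      by (rule transpose_vec_mult_scalar[OF rx rv_car[OF hm u] l])
    also have "\<dots> = l \<bullet> (\<rho> (x \<otimes> h) *\<^sub>v u)" using rmulv[OF x hm u] by simp
    finally show "\<phi> (inv h) * (?l \<bullet> (\<rho> h *\<^sub>v u)) = \<phi> (inv h) * (l \<bullet> (\<rho> (x \<otimes> h) *\<^sub>v u))" by simp
  qed
  finally show ?thesis .
qed

definition Lam :: "complex vec set" where
  "Lam = {l \<in> carrier_vec n. \<forall>h\<in>H. \<forall>v\<in>carrier_vec n. l \<bullet> (\<rho> h *\<^sub>v v) = \<phi> h * (l \<bullet> v)}"

lemma LamD: "l \<in> Lam \<Longrightarrow> l \<in> carrier_vec n" unfolding Lam_def by simp

lemma Lam_left: assumes l: "l \<in> Lam" and h: "h \<in> H" and y: "y \<in> carrier W" and v: "v \<in> carrier_vec n"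
  shows "l \<bullet> (\<rho> (h \<otimes> y) *\<^sub>v v) = \<phi> h * (l \<bullet> (\<rho> y *\<^sub>v v))"
proof -
  have hm: "h \<in> carrier W" using h Hmem by blast
  have "l \<bullet> (\<rho> (h \<otimes> y) *\<^sub>v v) = l \<bullet> (\<rho> h *\<^sub>v (\<rho> y *\<^sub>v v))" using rmulv[OF hm y v] by simp
  also have "\<dots> = \<phi> h * (l \<bullet> (\<rho> y *\<^sub>v v))" using l h rc[OF y] v unfolding Lam_def by simp
  finally show ?thesis .
qed

lemma Lam_smult: assumes l: "l \<in> Lam" shows "c \<cdot>\<^sub>v l \<in> Lam"
  unfolding Lam_def
proof (intro CollectI conjI ballI)
  show "c \<cdot>\<^sub>v l \<in> carrier_vec n" using LamD[OF l] by simp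
  fix h and v :: "complex vec" assume h: "h \<in> H" and v: "v \<in> carrier_vec n"
  have hm: "h \<in> carrier W" using h Hmem by blast
  have "(c \<cdot>\<^sub>v l) \<bullet> (\<rho> h *\<^sub>v v) = c * (l \<bullet> (\<rho> h *\<^sub>v v))"
    by (rule smult_scalar_prod_distrib[OF LamD[OF l] rv_car[OF hm v]])
  also have "\<dots> = c * (\<phi> h * (l \<bullet> v))" using l h v unfolding Lam_def by simp
  also have "\<dots> = \<phi> h * ((c \<cdot>\<^sub>v l) \<bullet> v)" using smult_scalar_prod_distrib[OF LamD[OF l] v] by simp
  finally show "(c \<cdot>\<^sub>v l) \<bullet> (\<rho> h *\<^sub>v v) = \<phi> h * ((c \<cdot>\<^sub>v l) \<bullet> v)" .
qed

lemma Lam_minus: assumes l1: "l1 \<in> Lam" and l2: "l2 \<in> Lam" shows "l1 - l2 \<in> Lam"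
  unfolding Lam_def
proof (intro CollectI conjI ballI)
  show "l1 - l2 \<in> carrier_vec n" using LamD[OF l1] LamD[OF l2] by simp
  fix h and v :: "complex vec" assume h: "h \<in> H" and v: "v \<in> carrier_vec n"
  have hm: "h \<in> carrier W" using h Hmem by blast
  have "(l1 - l2) \<bullet> (\<rho> h *\<^sub>v v) = l1 \<bullet> (\<rho> h *\<^sub>v v) - l2 \<bullet> (\<rho> h *\<^sub>v v)"
    by (rule minus_scalar_prod_distrib[OF LamD[OF l1] LamD[OF l2] rv_car[OF hm v]])
  also have "\<dots> = \<phi> h * (l1 \<bullet> v) - \<phi> h * (l2 \<bullet> v)" using l1 l2 h v unfolding Lam_def by simp
  also have "\<dots> = \<phi> h * ((l1 - l2) \<bullet> v)"
    using minus_scalar_prod_distrib[OF LamD[OF l1] LamD[OF l2] v] by (simp add: right_diff_distrib)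
  finally show "(l1 - l2) \<bullet> (\<rho> h *\<^sub>v v) = \<phi> h * ((l1 - l2) \<bullet> v)" .
qed

lemma Mx_Lam: assumes x: "x \<in> carrier W" and l: "l \<in> carrier_vec n"
  shows "Mx x *\<^sub>v l \<in> Lam"
  unfolding Lam_def
proof (intro CollectI conjI ballI)
  show "Mx x *\<^sub>v l \<in> carrier_vec n" using Mx_car[OF x] l by simp
  fix k and v :: "complex vec" assume k: "k \<in> H" and v: "v \<in> carrier_vec n"
  have km: "k \<in> carrier W" "inv k \<in> H" "inv k \<in> carrier W" using k Hmem Hinv by auto
  have rkv: "\<rho> k *\<^sub>v v \<in> carrier_vec n" using rc[OF km(1)] v by simp
  have "(Mx x *\<^sub>v l) \<bullet> (\<rho> k *\<^sub>v v) = (\<Sum>h\<in>H. \<phi> (inv h) * (l \<bullet> (\<rho> (x \<otimes> h) *\<^sub>v (\<rho> k *\<^sub>v v))))"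
    using Mx_scal[OF x l rkv] K1[OF x l rkv] by simp
  also have "\<dots> = (\<Sum>h\<in>H. \<phi> (inv h) * (l \<bullet> (\<rho> (x \<otimes> h \<otimes> k) *\<^sub>v v)))"
    by (rule sum.cong[OF refl]) (use x km v Hmem in \<open>simp add: rmulv\<close>)
  also have "\<dots> = (\<Sum>h\<in>H. \<phi> (inv (h \<otimes> inv k)) * (l \<bullet> (\<rho> (x \<otimes> (h \<otimes> inv k) \<otimes> k) *\<^sub>v v)))"
    by (rule sum.reindex_bij_betw[OF bij_rmult_sub[OF sub km(2)], of "\<lambda>h. \<phi> (inv h) * (l \<bullet> (\<rho> (x \<otimes> h \<otimes> k) *\<^sub>v v))", symmetric])
  also have "\<dots> = (\<Sum>h\<in>H. \<phi> k * (\<phi> (inv h) * (l \<bullet> (\<rho> (x \<otimes> h) *\<^sub>v v))))"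
  proof (rule sum.cong[OF refl])
    fix h assume h: "h \<in> H"
    have hm: "h \<in> carrier W" using h Hmem by blast
    have e1: "x \<otimes> (h \<otimes> inv k) \<otimes> k = x \<otimes> h" using x hm km by (simp add: m_assoc)
    have e2: "\<phi> (inv (h \<otimes> inv k)) = \<phi> (inv h) * \<phi> k"
      using \<phi>inv_mult[OF h km(2)] km by simp
    show "\<phi> (inv (h \<otimes> inv k)) * (l \<bullet> (\<rho> (x \<otimes> (h \<otimes> inv k) \<otimes> k) *\<^sub>v v)) = \<phi> k * (\<phi> (inv h) * (l \<bullet> (\<rho> (x \<otimes> h) *\<^sub>v v)))"
      unfolding e1 e2 by (simp add: ac_simps)
  qed
  also have "\<dots> = \<phi> k * ((Mx x *\<^sub>v l) \<bullet> v)"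
    using Mx_scal[OF x l v] K1[OF x l v] by (simp add: sum_distrib_left)
  finally show "(Mx x *\<^sub>v l) \<bullet> (\<rho> k *\<^sub>v v) = \<phi> k * ((Mx x *\<^sub>v l) \<bullet> v)" .
qed

lemma Lam_Q: assumes l: "l \<in> Lam" and v: "v \<in> carrier_vec n"
  shows "l \<bullet> (Qm *\<^sub>v v) = of_nat (card H) * (l \<bullet> v)"
proof -
  have "l \<bullet> (Qm *\<^sub>v v) = (\<Sum>h\<in>H. \<phi> (inv h) * (l \<bullet> (\<rho> h *\<^sub>v v)))" using Qscal[OF LamD[OF l] v] .
  also have "\<dots> = (\<Sum>h\<in>H. l \<bullet> v)"
    by (rule sum.cong[OF refl]) (use l v \<phi>inv in \<open>auto simp: Lam_def mult.assoc[symmetric]\<close>)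
  also have "\<dots> = of_nat (card H) * (l \<bullet> v)" by simp
  finally show ?thesis .
qed

lemma M1_Lam: assumes l: "l \<in> Lam" shows "Mx \<one> *\<^sub>v l = of_nat (card H) \<cdot>\<^sub>v l"
proof (rule vec_eq_scal)
  show "Mx \<one> *\<^sub>v l \<in> carrier_vec n" using LamD[OF l] by simp
  show "of_nat (card H) \<cdot>\<^sub>v l \<in> carrier_vec n" using LamD[OF l] by simp
  fix v :: "complex vec" assume v: "v \<in> carrier_vec n"
  have "(Mx \<one> *\<^sub>v l) \<bullet> v = l \<bullet> (Qm *\<^sub>v v)" using Mx_scal[OF one_closed LamD[OF l] v] v by (simp add: rone)
  thus "(Mx \<one> *\<^sub>v l) \<bullet> v = (of_nat (card H) \<cdot>\<^sub>v l) \<bullet> v" using Lam_Q[OF l v] LamD[OF l] v by simp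
qed

lemma MM_expand: assumes l: "l \<in> carrier_vec n" and x: "x \<in> carrier W" and y: "y \<in> carrier W" and v: "v \<in> carrier_vec n"
  shows "(Mx x *\<^sub>v (Mx y *\<^sub>v l)) \<bullet> v = Ssum (\<lambda>z. l \<bullet> (\<rho> z *\<^sub>v v)) y x"
proof -
  have Qv: "Qm *\<^sub>v v \<in> carrier_vec n" using v by simp
  have u: "\<rho> x *\<^sub>v (Qm *\<^sub>v v) \<in> carrier_vec n" using rc[OF x] v by simp
  have "(Mx x *\<^sub>v (Mx y *\<^sub>v l)) \<bullet> v = (Mx y *\<^sub>v l) \<bullet> (\<rho> x *\<^sub>v (Qm *\<^sub>v v))"
    using Mx_scal[OF x _ v, of "Mx y *\<^sub>v l"] Mx_car[OF y] l by simp
  also have "\<dots> = l \<bullet> (\<rho> y *\<^sub>v (Qm *\<^sub>v (\<rho> x *\<^sub>v (Qm *\<^sub>v v))))" by (rule Mx_scal[OF y l u])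
  also have "\<dots> = (\<Sum>m\<in>H. \<phi> (inv m) * (l \<bullet> (\<rho> (y \<otimes> m) *\<^sub>v (\<rho> x *\<^sub>v (Qm *\<^sub>v v)))))" by (rule K1[OF y l u])
  also have "\<dots> = (\<Sum>m\<in>H. \<phi> (inv m) * (\<Sum>h\<in>H. \<phi> (inv h) * (l \<bullet> (\<rho> (y \<otimes> m \<otimes> x \<otimes> h) *\<^sub>v v))))"
  proof (rule sum.cong[OF refl])
    fix m assume m: "m \<in> H"
    have ym: "y \<otimes> m \<in> carrier W" using y m Hmem by blast
    have "\<rho> (y \<otimes> m) *\<^sub>v (\<rho> x *\<^sub>v (Qm *\<^sub>v v)) = \<rho> (y \<otimes> m \<otimes> x) *\<^sub>v (Qm *\<^sub>v v)"
      using rmulv[OF ym x Qv] by simp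
    hence "l \<bullet> (\<rho> (y \<otimes> m) *\<^sub>v (\<rho> x *\<^sub>v (Qm *\<^sub>v v))) = (\<Sum>h\<in>H. \<phi> (inv h) * (l \<bullet> (\<rho> (y \<otimes> m \<otimes> x \<otimes> h) *\<^sub>v v)))"
      using K1[OF _ l v, of "y \<otimes> m \<otimes> x"] ym x by simp
    thus "\<phi> (inv m) * (l \<bullet> (\<rho> (y \<otimes> m) *\<^sub>v (\<rho> x *\<^sub>v (Qm *\<^sub>v v)))) = \<phi> (inv m) * (\<Sum>h\<in>H. \<phi> (inv h) * (l \<bullet> (\<rho> (y \<otimes> m \<otimes> x \<otimes> h) *\<^sub>v v)))"
      by simp
  qed
  finally show ?thesis unfolding Ssum_def .
qed

lemma M_comm: assumes l: "l \<in> Lam" and x: "x \<in> carrier W" and y: "y \<in> carrier W"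
  shows "Mx x *\<^sub>v (Mx y *\<^sub>v l) = Mx y *\<^sub>v (Mx x *\<^sub>v l)"
proof (rule vec_eq_scal)
  have lc: "l \<in> carrier_vec n" using LamD[OF l] .
  show "Mx x *\<^sub>v (Mx y *\<^sub>v l) \<in> carrier_vec n" using lc x y by simp
  show "Mx y *\<^sub>v (Mx x *\<^sub>v l) \<in> carrier_vec n" using lc x y by simp
  fix v :: "complex vec" assume v: "v \<in> carrier_vec n"
  have F: "\<And>h z. h \<in> H \<Longrightarrow> z \<in> carrier W \<Longrightarrow> (\<lambda>z. l \<bullet> (\<rho> z *\<^sub>v v)) (h \<otimes> z) = \<phi> h * (\<lambda>z. l \<bullet> (\<rho> z *\<^sub>v v)) z"
    using Lam_left[OF l _ _ v] by simp
  show "(Mx x *\<^sub>v (Mx y *\<^sub>v l)) \<bullet> v = (Mx y *\<^sub>v (Mx x *\<^sub>v l)) \<bullet> v"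
    unfolding MM_expand[OF lc x y v] MM_expand[OF lc y x v] by (rule Ssum_comm[OF F x y])
qed

end

lemma pow_mat_Suc_left: assumes A: "A \<in> carrier_mat n n"
  shows "A ^\<^sub>m Suc k = A * A ^\<^sub>m k"
proof (induction k)
  case 0 thus ?case using A by simp
next
  case (Suc k)
  have "A ^\<^sub>m Suc (Suc k) = A ^\<^sub>m Suc k * A" by simp
  also have "\<dots> = (A * A ^\<^sub>m k) * A" using Suc by simp
  also have "\<dots> = A * (A ^\<^sub>m k * A)" using A by (simp add: assoc_mult_mat[of _ n n _ n _ n])
  finally show ?case by simp
qed

lemma mat_vec_zero: "A \<in> carrier_mat m n \<Longrightarrow> A *\<^sub>v 0\<^sub>v n = (0\<^sub>v m :: 'a :: comm_ring_1 vec)"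
  by (intro eq_vecI) auto

context rp begin

lemma npos: "n > 0" using irr unfolding irred_rep_def by simp

lemma kern: assumes l: "l \<in> carrier_vec n" and l0: "l \<noteq> 0\<^sub>v n" and u: "u \<in> carrier_vec n"
  and z: "\<And>x. x \<in> carrier W \<Longrightarrow> l \<bullet> (\<rho> x *\<^sub>v u) = 0"
  shows "u = 0\<^sub>v n"
proof -
  define U where "U = {u \<in> carrier_vec n. \<forall>x\<in>carrier W. l \<bullet> (\<rho> x *\<^sub>v u) = 0}"
  have sub: "subspace_vec n U" unfolding subspace_vec_def
  proof (intro conjI ballI allI)
    show "U \<subseteq> carrier_vec n" unfolding U_def by auto
    show "0\<^sub>v n \<in> U" unfolding U_def using l by (auto simp: mat_vec_zero[OF rc])
  next
    fix a b assume a: "a \<in> U" and b: "b \<in> U"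
    show "a + b \<in> U" unfolding U_def
    proof (intro CollectI conjI ballI)
      show "a + b \<in> carrier_vec n" using a b unfolding U_def by auto
      fix x assume x: "x \<in> carrier W"
      have ac: "a \<in> carrier_vec n" and bc: "b \<in> carrier_vec n" using a b unfolding U_def by auto
      have "l \<bullet> (\<rho> x *\<^sub>v (a + b)) = l \<bullet> (\<rho> x *\<^sub>v a) + l \<bullet> (\<rho> x *\<^sub>v b)"
        using mult_add_distrib_mat_vec[OF rc[OF x] ac bc] scalar_prod_add_distrib[OF l rv_car[OF x ac] rv_car[OF x bc]] by simp
      thus "l \<bullet> (\<rho> x *\<^sub>v (a + b)) = 0" using a b x unfolding U_def by simp
    qed
  next
    fix c and a assume a: "a \<in> U"
    show "c \<cdot>\<^sub>v a \<in> U" unfolding U_def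
    proof (intro CollectI conjI ballI)
      have ac: "a \<in> carrier_vec n" using a unfolding U_def by auto
      show "c \<cdot>\<^sub>v a \<in> carrier_vec n" using ac by simp
      fix x assume x: "x \<in> carrier W"
      have "l \<bullet> (\<rho> x *\<^sub>v (c \<cdot>\<^sub>v a)) = c * (l \<bullet> (\<rho> x *\<^sub>v a))"
        using mult_mat_vec[OF rc[OF x] ac] scalar_prod_smult_distrib[OF l rv_car[OF x ac]] by simp
      thus "l \<bullet> (\<rho> x *\<^sub>v (c \<cdot>\<^sub>v a)) = 0" using a x unfolding U_def by simp
    qed
  qed
  have inv: "\<forall>g\<in>carrier W. \<forall>a\<in>U. \<rho> g *\<^sub>v a \<in> U"
  proof (intro ballI)
    fix g a assume g: "g \<in> carrier W" and a: "a \<in> U"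
    have ac: "a \<in> carrier_vec n" using a unfolding U_def by auto
    show "\<rho> g *\<^sub>v a \<in> U" unfolding U_def
    proof (intro CollectI conjI ballI)
      show "\<rho> g *\<^sub>v a \<in> carrier_vec n" using g ac by simp
      fix x assume x: "x \<in> carrier W"
      have "l \<bullet> (\<rho> x *\<^sub>v (\<rho> g *\<^sub>v a)) = l \<bullet> (\<rho> (x \<otimes> g) *\<^sub>v a)" using rmulv[OF x g ac] by simp
      thus "l \<bullet> (\<rho> x *\<^sub>v (\<rho> g *\<^sub>v a)) = 0" using a x g unfolding U_def by simp
    qed
  qed
  have "U = {0\<^sub>v n} \<or> U = carrier_vec n" using irr sub inv unfolding irred_rep_def by blast
  moreover have "U \<noteq> carrier_vec n"
  proof
    assume UC: "U = carrier_vec n"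
    have "l = 0\<^sub>v n"
    proof (rule eq_vecI)
      fix i assume "i < dim_vec (0\<^sub>v n)"
      hence i: "i < n" by simp
      have "unit_vec n i \<in> U" using UC by simp
      hence "l \<bullet> (\<rho> \<one> *\<^sub>v unit_vec n i) = 0" unfolding U_def by simp
      thus "l $ i = 0\<^sub>v n $ i" using i by (simp add: rone scalar_prod_right_unit)
    qed (use l in simp)
    thus False using l0 by simp
  qed
  moreover have "u \<in> U" unfolding U_def using u z by simp
  ultimately show ?thesis by auto
qed

lemma Kext: assumes l0L: "l0 \<in> Lam" and l0: "l0 \<noteq> 0\<^sub>v n" and x: "x \<in> carrier W"
  and ev: "Mx x *\<^sub>v l0 = c \<cdot>\<^sub>v l0" and mu: "\<mu> \<in> Lam"
  shows "Mx x *\<^sub>v \<mu> = c \<cdot>\<^sub>v \<mu>"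
proof (rule vec_eq_scal)
  have l0c: "l0 \<in> carrier_vec n" using LamD[OF l0L] .
  have muc: "\<mu> \<in> carrier_vec n" using LamD[OF mu] .
  show "Mx x *\<^sub>v \<mu> \<in> carrier_vec n" using x muc by simp
  show "c \<cdot>\<^sub>v \<mu> \<in> carrier_vec n" using muc by simp
  fix v :: "complex vec" assume v: "v \<in> carrier_vec n"
  define w where "w = \<rho> x *\<^sub>v (Qm *\<^sub>v v) - c \<cdot>\<^sub>v v"
  have wc: "w \<in> carrier_vec n" unfolding w_def using x v by simp
  have z: "\<And>y. y \<in> carrier W \<Longrightarrow> l0 \<bullet> (\<rho> y *\<^sub>v (Qm *\<^sub>v w)) = 0"
  proof -
    fix y assume y: "y \<in> carrier W"
    have my: "Mx y *\<^sub>v l0 \<in> carrier_vec n" using y l0c by simp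
    have "l0 \<bullet> (\<rho> y *\<^sub>v (Qm *\<^sub>v w)) = (Mx y *\<^sub>v l0) \<bullet> w" using Mx_scal[OF y l0c wc] by simp
    also have "\<dots> = (Mx y *\<^sub>v l0) \<bullet> (\<rho> x *\<^sub>v (Qm *\<^sub>v v)) - c * ((Mx y *\<^sub>v l0) \<bullet> v)"
      unfolding w_def using scalar_prod_minus_distrib[OF my rv_car[OF x Qv_car[OF v]] smult_carrier_vec[THEN iffD2, OF v]]
        scalar_prod_smult_distrib[OF my v] by simp
    also have "(Mx y *\<^sub>v l0) \<bullet> (\<rho> x *\<^sub>v (Qm *\<^sub>v v)) = (Mx x *\<^sub>v (Mx y *\<^sub>v l0)) \<bullet> v"
      using Mx_scal[OF x my v] by simp
    also have "\<dots> = (Mx y *\<^sub>v (Mx x *\<^sub>v l0)) \<bullet> v" using M_comm[OF l0L x y] by simp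
    also have "\<dots> = c * ((Mx y *\<^sub>v l0) \<bullet> v)"
      unfolding ev using mult_mat_vec[OF Mx_car[OF y] l0c] smult_scalar_prod_distrib[OF my v] by simp
    finally show "l0 \<bullet> (\<rho> y *\<^sub>v (Qm *\<^sub>v w)) = 0" by simp
  qed
  have u0: "Qm *\<^sub>v w = 0\<^sub>v n" by (rule kern[OF l0c l0 Qv_car[OF wc] z])
  have "of_nat (card H) * (\<mu> \<bullet> w) = \<mu> \<bullet> (Qm *\<^sub>v w)" using Lam_Q[OF mu wc] by simp
  also have "\<dots> = 0" unfolding u0 using muc by simp
  finally have "\<mu> \<bullet> w = 0" using Hne by simp
  hence "\<mu> \<bullet> (\<rho> x *\<^sub>v (Qm *\<^sub>v v)) = c * (\<mu> \<bullet> v)"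
    unfolding w_def using scalar_prod_minus_distrib[OF muc rv_car[OF x Qv_car[OF v]] smult_carrier_vec[THEN iffD2, OF v]]
        scalar_prod_smult_distrib[OF muc v] by simp
  thus "(Mx x *\<^sub>v \<mu>) \<bullet> v = (c \<cdot>\<^sub>v \<mu>) \<bullet> v"
    using Mx_scal[OF x muc v] smult_scalar_prod_distrib[OF muc v] by simp
qed

end

lemma zero_mat_vec: "v \<in> carrier_vec n \<Longrightarrow> 0\<^sub>m m n *\<^sub>v v = (0\<^sub>v m :: 'a :: comm_ring_1 vec)"
  by (intro eq_vecI) auto

lemma lin_func:
  fixes f :: "complex vec \<Rightarrow> complex"
  assumes add: "\<And>v w. v \<in> carrier_vec n \<Longrightarrow> w \<in> carrier_vec n \<Longrightarrow> f (v + w) = f v + f w"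
    and hom: "\<And>c v. v \<in> carrier_vec n \<Longrightarrow> f (c \<cdot>\<^sub>v v) = c * f v"
    and v: "v \<in> carrier_vec n"
  shows "f v = vec n (\<lambda>i. f (unit_vec n i)) \<bullet> v"
proof -
  define part where "part k = vec n (\<lambda>i. if i < k then v $ i else 0)" for k
  have pc: "part k \<in> carrier_vec n" for k unfolding part_def by simp
  have f0: "f (0\<^sub>v n) = 0"
  proof -
    have "0\<^sub>v n = (0::complex) \<cdot>\<^sub>v 0\<^sub>v n" by (intro eq_vecI) auto
    hence "f (0\<^sub>v n) = 0 * f (0\<^sub>v n)" using hom[of "0\<^sub>v n" 0] by simp
    thus ?thesis by simp
  qed
  have step: "k \<le> n \<Longrightarrow> f (part k) = (\<Sum>i\<in>{0..<k}. v $ i * f (unit_vec n i))" for k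
  proof (induction k)
    case 0
    have "part 0 = 0\<^sub>v n" unfolding part_def by (intro eq_vecI) auto
    thus ?case using f0 by simp
  next
    case (Suc k)
    have "part (Suc k) = part k + v $ k \<cdot>\<^sub>v unit_vec n k"
      unfolding part_def by (intro eq_vecI) (auto simp: unit_vec_def less_Suc_eq)
    hence "f (part (Suc k)) = f (part k) + v $ k * f (unit_vec n k)"
      using add[OF pc, of "v $ k \<cdot>\<^sub>v unit_vec n k" k] hom[of "unit_vec n k" "v $ k"] by simp
    thus ?case using Suc by simp
  qed
  have "part n = v" unfolding part_def using v by (intro eq_vecI) auto
  hence "f v = (\<Sum>i\<in>{0..<n}. v $ i * f (unit_vec n i))" using step[of n] by simp
  also have "\<dots> = vec n (\<lambda>i. f (unit_vec n i)) \<bullet> v"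
    unfolding scalar_prod_def using v by (intro sum.cong) auto
  finally show ?thesis .
qed

context rp begin

lemma eig: assumes lL: "l \<in> Lam" and l0: "l \<noteq> 0\<^sub>v n" and x: "x \<in> carrier W"
  shows "\<exists>c. \<forall>\<mu>\<in>Lam. Mx x *\<^sub>v \<mu> = c \<cdot>\<^sub>v \<mu>"
proof -
  define A where "A = Mx x * Mx \<one>"
  have Ac: "A \<in> carrier_mat n n" unfolding A_def using Mx_car[OF x] Mx_car[OF one_closed] by simp
  have Av: "\<And>w. w \<in> carrier_vec n \<Longrightarrow> A *\<^sub>v w = Mx x *\<^sub>v (Mx \<one> *\<^sub>v w)"
    unfolding A_def using assoc_mult_mat_vec[OF Mx_car[OF x] Mx_car[OF one_closed]] by simp
  have AL: "\<And>w. w \<in> carrier_vec n \<Longrightarrow> A *\<^sub>v w \<in> Lam"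
    using Av Mx_Lam[OF x] by simp
  have ALam: "\<And>w. w \<in> Lam \<Longrightarrow> A *\<^sub>v w = of_nat (card H) \<cdot>\<^sub>v (Mx x *\<^sub>v w)"
    using Av M1_Lam LamD mult_mat_vec[OF Mx_car[OF x]] by simp
  have cH: "(of_nat (card H) :: complex) \<noteq> 0" using Hne by simp
  have unsc: "\<And>(y::complex vec) e. y \<in> carrier_vec n \<Longrightarrow> of_nat (card H) \<cdot>\<^sub>v y = e \<Longrightarrow> y = (1 / of_nat (card H)) \<cdot>\<^sub>v e"
  proof -
    fix y e :: "complex vec" assume "y \<in> carrier_vec n" and ye: "of_nat (card H) \<cdot>\<^sub>v y = e"
    have "(1 / of_nat (card H)) \<cdot>\<^sub>v e = ((1 / of_nat (card H)) * of_nat (card H)) \<cdot>\<^sub>v y"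
      unfolding ye[symmetric] by (rule smult_smult_assoc)
    also have "(1 / of_nat (card H)) * of_nat (card H) = (1::complex)" using cH by simp
    finally show "y = (1 / of_nat (card H)) \<cdot>\<^sub>v e" by simp
  qed
  from eig_or_nilp[OF Ac] show ?thesis
  proof
    assume "\<exists>e v. e \<noteq> 0 \<and> eigenvector A v e"
    then obtain e w where e: "e \<noteq> 0" and ev: "eigenvector A w e" by blast
    have wc: "w \<in> carrier_vec n" and w0: "w \<noteq> 0\<^sub>v n" and Aw: "A *\<^sub>v w = e \<cdot>\<^sub>v w"
      using ev Ac unfolding eigenvector_def by auto
    have weq: "w = (1 / e) \<cdot>\<^sub>v (A *\<^sub>v w)" using Aw e by (simp add: smult_smult_assoc)
    have wL: "w \<in> Lam" by (subst weq) (rule Lam_smult[OF AL[OF wc]])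
    have "of_nat (card H) \<cdot>\<^sub>v (Mx x *\<^sub>v w) = e \<cdot>\<^sub>v w" using ALam[OF wL] Aw by simp
    hence "Mx x *\<^sub>v w = (1 / of_nat (card H)) \<cdot>\<^sub>v (e \<cdot>\<^sub>v w)" using unsc Mv_car[OF x wc] by blast
    hence "Mx x *\<^sub>v w = (e / of_nat (card H)) \<cdot>\<^sub>v w" by (simp add: smult_smult_assoc)
    thus ?thesis using Kext[OF wL w0 x] by blast
  next
    assume nil: "A ^\<^sub>m n = 0\<^sub>m n n"
    have powL: "\<And>k w. w \<in> Lam \<Longrightarrow> A ^\<^sub>m k *\<^sub>v w \<in> Lam"
    proof -
      fix k show "\<And>w. w \<in> Lam \<Longrightarrow> A ^\<^sub>m k *\<^sub>v w \<in> Lam"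
      proof (induction k)
        case 0 thus ?case using Ac LamD by simp
      next
        case (Suc k)
        have "A ^\<^sub>m Suc k *\<^sub>v w = A ^\<^sub>m k *\<^sub>v (A *\<^sub>v w)"
          using assoc_mult_mat_vec[OF pow_carrier_mat[OF Ac, of k] Ac LamD[OF Suc.prems]] by simp
        thus ?case using Suc.IH[OF AL[OF LamD[OF Suc.prems]]] by simp
      qed
    qed
    define P where "P k = (A ^\<^sub>m k *\<^sub>v l = 0\<^sub>v n)" for k
    have Pn: "P n" unfolding P_def nil using zero_mat_vec[OF LamD[OF lL]] by simp
    have P0: "\<not> P 0" unfolding P_def using Ac LamD[OF lL] l0 by simp
    define k0 where "k0 = (LEAST k. P k)"
    have Pk0: "P k0" unfolding k0_def using Pn by (rule LeastI)
    have "k0 \<noteq> 0" using Pk0 P0 by (cases k0) auto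
    then obtain j where j: "k0 = Suc j" by (cases k0) auto
    have nPj: "\<not> P j" using not_less_Least[of j P] unfolding k0_def[symmetric] j by simp
    define w where "w = A ^\<^sub>m j *\<^sub>v l"
    have wL: "w \<in> Lam" unfolding w_def by (rule powL[OF lL])
    have w0: "w \<noteq> 0\<^sub>v n" using nPj unfolding P_def w_def by simp
    have "A *\<^sub>v w = A ^\<^sub>m Suc j *\<^sub>v l"
      unfolding w_def pow_mat_Suc_left[OF Ac] using assoc_mult_mat_vec[OF Ac pow_carrier_mat[OF Ac, of j] LamD[OF lL]] by simp
    also have "\<dots> = 0\<^sub>v n" using Pk0 unfolding P_def j .
    finally have "of_nat (card H) \<cdot>\<^sub>v (Mx x *\<^sub>v w) = 0\<^sub>v n" using ALam[OF wL] by simp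
    hence "Mx x *\<^sub>v w = (1 / of_nat (card H)) \<cdot>\<^sub>v 0\<^sub>v n" using unsc Mv_car[OF x LamD[OF wL]] by blast
    hence "Mx x *\<^sub>v w = 0 \<cdot>\<^sub>v w" using LamD[OF wL] by (intro eq_vecI) auto
    thus ?thesis using Kext[OF wL w0 x] by blast
  qed
qed

lemma dim1: assumes lL: "l \<in> Lam" and l0: "l \<noteq> 0\<^sub>v n" and mu: "\<mu> \<in> Lam"
  shows "\<exists>d. \<mu> = d \<cdot>\<^sub>v l"
proof -
  have lc: "l \<in> carrier_vec n" and muc: "\<mu> \<in> carrier_vec n" using LamD lL mu by auto
  obtain i where i: "i < n" and li: "l $ i \<noteq> 0"
  proof -
    have "\<exists>i<n. l $ i \<noteq> 0"
    proof (rule ccontr)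
      assume "\<not> (\<exists>i<n. l $ i \<noteq> 0)"
      hence "l = 0\<^sub>v n" using lc by (intro eq_vecI) auto
      thus False using l0 by simp
    qed
    thus ?thesis using that by blast
  qed
  define v0 :: "complex vec" where "v0 = unit_vec n i"
  have v0c: "v0 \<in> carrier_vec n" unfolding v0_def by simp
  define d where "d = \<mu> $ i / l $ i"
  define \<eta> where "\<eta> = \<mu> - d \<cdot>\<^sub>v l"
  have etaL: "\<eta> \<in> Lam" unfolding \<eta>_def by (rule Lam_minus[OF mu Lam_smult[OF lL]])
  have etac: "\<eta> \<in> carrier_vec n" using LamD[OF etaL] .
  have eta_i: "\<eta> \<bullet> v0 = 0" unfolding v0_def using i etac muc lc
    by (simp add: scalar_prod_right_unit \<eta>_def d_def li)
  have "\<eta> = 0\<^sub>v n"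
  proof (rule ccontr)
    assume e0: "\<eta> \<noteq> 0\<^sub>v n"
    have z: "\<And>x. x \<in> carrier W \<Longrightarrow> \<eta> \<bullet> (\<rho> x *\<^sub>v (Qm *\<^sub>v v0)) = 0"
    proof -
      fix x assume x: "x \<in> carrier W"
      obtain c where c: "\<forall>\<mu>\<in>Lam. Mx x *\<^sub>v \<mu> = c \<cdot>\<^sub>v \<mu>" using eig[OF lL l0 x] by blast
      have "\<eta> \<bullet> (\<rho> x *\<^sub>v (Qm *\<^sub>v v0)) = (Mx x *\<^sub>v \<eta>) \<bullet> v0" using Mx_scal[OF x etac v0c] by simp
      also have "\<dots> = c * (\<eta> \<bullet> v0)" using c etaL etac v0c by simp
      finally show "\<eta> \<bullet> (\<rho> x *\<^sub>v (Qm *\<^sub>v v0)) = 0" using eta_i by simp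
    qed
    have "Qm *\<^sub>v v0 = 0\<^sub>v n" by (rule kern[OF etac e0 Qv_car[OF v0c] z])
    hence "l \<bullet> (Qm *\<^sub>v v0) = 0" using lc by simp
    moreover have "l \<bullet> (Qm *\<^sub>v v0) = of_nat (card H) * l $ i"
      using Lam_Q[OF lL v0c] i unfolding v0_def by (simp add: scalar_prod_right_unit)
    ultimately show False using li Hne by simp
  qed
  hence e0: "\<eta> = 0\<^sub>v n" .
  have "\<mu> = d \<cdot>\<^sub>v l"
  proof (rule eq_vecI)
    fix j assume "j < dim_vec (d \<cdot>\<^sub>v l)"
    hence j: "j < n" using lc by simp
    have "\<eta> $ j = 0" using e0 j by simp
    thus "\<mu> $ j = (d \<cdot>\<^sub>v l) $ j" using j muc lc unfolding \<eta>_def by simp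
  qed (use muc lc in simp)
  thus ?thesis by blast
qed

end

context rp begin

definition lT :: "(complex vec \<Rightarrow> 'a \<Rightarrow> complex) \<Rightarrow> complex vec" where
  "lT T = vec n (\<lambda>i. T (unit_vec n i) \<one>)"

lemma lT_car: "lT T \<in> carrier_vec n" unfolding lT_def by simp

lemma T_lin: assumes T: "intertwiner W H \<phi> n \<rho> T" and v: "v \<in> carrier_vec n"
  shows "T v \<one> = lT T \<bullet> v"
  unfolding lT_def
proof (rule lin_func[of n "\<lambda>v. T v \<one>", OF _ _ v])
  fix a b :: "complex vec" assume "a \<in> carrier_vec n" "b \<in> carrier_vec n"
  thus "T (a + b) \<one> = T a \<one> + T b \<one>" using T unfolding intertwiner_def by simp
next
  fix c and a :: "complex vec" assume "a \<in> carrier_vec n"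
  thus "T (c \<cdot>\<^sub>v a) \<one> = c * T a \<one>" using T unfolding intertwiner_def by simp
qed

lemma T_repr: assumes T: "intertwiner W H \<phi> n \<rho> T" and v: "v \<in> carrier_vec n" and x: "x \<in> carrier W"
  shows "T v x = lT T \<bullet> (\<rho> x *\<^sub>v v)"
proof -
  have "T (\<rho> x *\<^sub>v v) = (\<lambda>y. T v (y \<otimes> x))" using T x v unfolding intertwiner_def by simp
  hence "T (\<rho> x *\<^sub>v v) \<one> = T v x" using x by simp
  thus ?thesis using T_lin[OF T rv_car[OF x v]] by simp
qed

lemma T_out: assumes T: "intertwiner W H \<phi> n \<rho> T" and v: "v \<in> carrier_vec n" and x: "x \<notin> carrier W"
  shows "T v x = 0"
  using T v x unfolding intertwiner_def ind_space_def by simp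

lemma lT_Lam: assumes T: "intertwiner W H \<phi> n \<rho> T" shows "lT T \<in> Lam"
  unfolding Lam_def
proof (intro CollectI conjI ballI)
  show "lT T \<in> carrier_vec n" by (rule lT_car)
  fix h and v :: "complex vec" assume h: "h \<in> H" and v: "v \<in> carrier_vec n"
  have hm: "h \<in> carrier W" using h Hmem by blast
  have "T v \<in> ind_space W H \<phi>" using T v unfolding intertwiner_def by simp
  hence "T v (h \<otimes> \<one>) = \<phi> h * T v \<one>" using h unfolding ind_space_def by simp
  hence "T v h = \<phi> h * T v \<one>" using hm by simp
  thus "lT T \<bullet> (\<rho> h *\<^sub>v v) = \<phi> h * (lT T \<bullet> v)" using T_repr[OF T v hm] T_lin[OF T v] by simp
qed

lemma gelf: assumes T1: "intertwiner W H \<phi> n \<rho> T1" and T2: "intertwiner W H \<phi> n \<rho> T2"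
  shows "(\<exists>c. \<forall>v\<in>carrier_vec n. T1 v = (\<lambda>x. c * T2 v x)) \<or> (\<exists>c. \<forall>v\<in>carrier_vec n. T2 v = (\<lambda>x. c * T1 v x))"
proof (cases "lT T2 = 0\<^sub>v n")
  case True
  have "\<forall>v\<in>carrier_vec n. T2 v = (\<lambda>x. 0 * T1 v x)"
  proof (intro ballI ext)
    fix v :: "complex vec" and x assume v: "v \<in> carrier_vec n"
    show "T2 v x = 0 * T1 v x"
    proof (cases "x \<in> carrier W")
      case True
      thus ?thesis using T_repr[OF T2 v True] \<open>lT T2 = 0\<^sub>v n\<close> rv_car[OF True v] by simp
    next
      case False thus ?thesis using T_out[OF T2 v False] by simp
    qed
  qed
  thus ?thesis by blast
next
  case False
  obtain d where d: "lT T1 = d \<cdot>\<^sub>v lT T2" using dim1[OF lT_Lam[OF T2] False lT_Lam[OF T1]] by blast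
  have "\<forall>v\<in>carrier_vec n. T1 v = (\<lambda>x. d * T2 v x)"
  proof (intro ballI ext)
    fix v :: "complex vec" and x assume v: "v \<in> carrier_vec n"
    show "T1 v x = d * T2 v x"
    proof (cases "x \<in> carrier W")
      case True
      thus ?thesis using T_repr[OF T1 v True] T_repr[OF T2 v True] d
          smult_scalar_prod_distrib[OF lT_car rv_car[OF True v]] by simp
    next
      case False thus ?thesis using T_out[OF T1 v False] T_out[OF T2 v False] by simp
    qed
  qed
  thus ?thesis by blast
qed

end

theorem proposition3p3:
  fixes G :: "('a, 'b) monoid_scheme" and \<xi> :: "'a \<Rightarrow> complex" and \<epsilon> :: "(nat \<Rightarrow> nat) \<Rightarrow> complex"
  assumes "group G" and "finite (carrier G)"
    and "linear_char G \<xi>"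
    and "\<epsilon> = (\<lambda>s. 1) \<or> \<epsilon> = (\<lambda>s. of_int (sign s))"
  shows "gelfand_triple (wreath2 G) (diag_wreath2 G) (tensor_char \<xi> \<epsilon>)"
proof -
  have hk: "hk (wreath2 G) (diag_wreath2 G) (tensor_char \<xi> \<epsilon>) (psiW \<xi>) (\<one>\<^bsub>G\<^esub>, \<one>\<^bsub>G\<^esub>, sw)"
    by (rule hk_inst[OF assms])
  show ?thesis unfolding gelfand_triple_def
  proof (intro allI impI)
    fix n \<rho> T1 T2
    assume a: "irred_rep (wreath2 G) n \<rho> \<and> intertwiner (wreath2 G) (diag_wreath2 G) (tensor_char \<xi> \<epsilon>) n \<rho> T1 \<and>
        intertwiner (wreath2 G) (diag_wreath2 G) (tensor_char \<xi> \<epsilon>) n \<rho> T2"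
    have rp: "rp (wreath2 G) (diag_wreath2 G) (tensor_char \<xi> \<epsilon>) (psiW \<xi>) (\<one>\<^bsub>G\<^esub>, \<one>\<^bsub>G\<^esub>, sw) n \<rho>"
      by (rule rp.intro[OF hk], rule rp_axioms.intro) (use a in simp)
    show "(\<exists>c. \<forall>v\<in>carrier_vec n. T1 v = (\<lambda>x. c * T2 v x)) \<or> (\<exists>c. \<forall>v\<in>carrier_vec n. T2 v = (\<lambda>x. c * T1 v x))"
      using rp.gelf[OF rp] a by simp
  qed
qed

end
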